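(* Let $\alpha\in(0,1)$, $\theta=\alpha/2$, and let $0=t_0<t_1<\cdots<t_N=T$ be a time mesh with steps $\tau_k=t_k-t_{k-1}$ and step ratios $r_k=\tau_k/\tau_{k-1}$ ($2\le k\le N$). Assume $r_k\ge r_\star(\alpha)$ for all $k\ge 2$, where $r_\star(\alpha)$ is the unique positive root $r$ of $$2\sqrt{\frac{2(1-\alpha/2)r}{1+\alpha+(1-\alpha/2)r}+\frac{r}{1+r}}+3-\frac{1}{r^2(1+r)}=0.$$ Then the auxiliary kernels $A^{(n)}_{n-k}$ (defined in the context) satisfy: (a) $A^{(n)}_{n-k-1}> A^{(n)}_{n-k}>0$ for $1\le k\le n-1$ ($n\ge2$); (b) $A^{(n-1)}_{n-1-k}>A^{(n)}_{n-k}$ for $1\le k\le n-1$ ($n\ge 2$); (c) $A^{(n-1)}_{n-2-k}-A^{(n-1)}_{n-1-k}> A^{(n)}_{n-k-1}-A^{(n)}_{n-k}$ for $1\le k\le n-2$ ($n\ge3$).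
   Context: Notation: $\omega_\beta(t):=t^{\beta-1}/\Gamma(\beta)$ for $\beta>0$ (and for $\beta=1-\alpha$ etc. by the same formula). Set $t_{n-\theta}:=\theta t_{n-1}+(1-\theta)t_n$ and $\varpi_n'(t):=\omega_{1-\alpha}(t_{n-\theta}-t)$ for $0\le t<t_{n-\theta}$. Define for $1\le k\le n$ $$a^{(n)}_{n-k}:=\frac{1}{\tau_k}\int_{t_{k-1}}^{\min\{t_k,t_{n-\theta}\}}\varpi_n'(s)\,ds,\qquad \zeta^{(n)}_{n-k}:=\frac{2}{\tau_k^2}\int_{t_{k-1}}^{t_k}(s-t_{k-1/2})\varpi_n'(s)\,ds,$$ where $t_{k-1/2}=(t_{k-1}+t_k)/2$. Define $\hat a^{(1)}_0:=\frac{2(1-\alpha)}{2-\alpha}a^{(1)}_0$ and, for $n\ge 2$, $\hat a^{(n)}_0:=\frac{2(1-\alpha)}{2-\alpha}a^{(n)}_0+\frac{1}{r_n(1+r_n)}\zeta^{(n)}_1$; $\hat a^{(n)}_{n-k}:=a^{(n)}_{n-k}+\frac{1}{r_k(1+r_k)}\zeta^{(n)}_{n-k+1}-\frac{1}{1+r_{k+1}}\zeta^{(n)}_{n-k}$ for $2\le k\le n-1$ ($n\ge3$); $\hat a^{(n)}_{n-1}:=a^{(n)}_{n-1}-\frac{1}{1+r_2}\zeta^{(n)}_{n-1}$. The auxiliary kernels are $A^{(n)}_0:=2\hat a^{(n)}_0$ and $A^{(n)}_{n-k}:=\hat a^{(n)}_{n-k}$ for $1\le k\le n-1$. *)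

theory Defs
  imports "HOL-Analysis.Analysis"
begin

definition tau :: "(nat \<Rightarrow> real) \<Rightarrow> nat \<Rightarrow> real" where
  "tau t k = t k - t (k - 1)"

definition ratio :: "(nat \<Rightarrow> real) \<Rightarrow> nat \<Rightarrow> real" where
  "ratio t k = tau t k / tau t (k - 1)"

definition omega :: "real \<Rightarrow> real \<Rightarrow> real" where
  "omega \<beta> x = x powr (\<beta> - 1) / Gamma \<beta>"

definition t_shift :: "real \<Rightarrow> (nat \<Rightarrow> real) \<Rightarrow> nat \<Rightarrow> real" where
  "t_shift \<alpha> t n = (\<alpha>/2) * t (n - 1) + (1 - \<alpha>/2) * t n"

definition varpi :: "real \<Rightarrow> (nat \<Rightarrow> real) \<Rightarrow> nat \<Rightarrow> real \<Rightarrow> real" where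
  "varpi \<alpha> t n s = omega (1 - \<alpha>) (t_shift \<alpha> t n - s)"

text \<open>a^{(n)}_{n-k}, indexed by j = n - k\<close>
definition akern :: "real \<Rightarrow> (nat \<Rightarrow> real) \<Rightarrow> nat \<Rightarrow> nat \<Rightarrow> real" where
  "akern \<alpha> t n j = (let k = n - j in
     (1 / tau t k) * integral {t (k - 1) .. min (t k) (t_shift \<alpha> t n)} (varpi \<alpha> t n))"

text \<open>zeta^{(n)}_{n-k}, indexed by j = n - k\<close>
definition zeta :: "real \<Rightarrow> (nat \<Rightarrow> real) \<Rightarrow> nat \<Rightarrow> nat \<Rightarrow> real" where
  "zeta \<alpha> t n j = (let k = n - j in
     (2 / (tau t k)^2) * integral {t (k - 1) .. t k}
        (\<lambda>s. (s - (t (k - 1) + t k) / 2) * varpi \<alpha> t n s))"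

text \<open>hat a^{(n)}_{n-k}, indexed by j = n - k (0 <= j <= n-1)\<close>
definition ahat :: "real \<Rightarrow> (nat \<Rightarrow> real) \<Rightarrow> nat \<Rightarrow> nat \<Rightarrow> real" where
  "ahat \<alpha> t n j =
    (if j = 0 then
       (if n = 1 then (2 * (1 - \<alpha>) / (2 - \<alpha>)) * akern \<alpha> t 1 0
        else (2 * (1 - \<alpha>) / (2 - \<alpha>)) * akern \<alpha> t n 0
             + 1 / (ratio t n * (1 + ratio t n)) * zeta \<alpha> t n 1)
     else if j = n - 1 then
       akern \<alpha> t n (n - 1) - 1 / (1 + ratio t 2) * zeta \<alpha> t n (n - 1)
     else (let k = n - j in
       akern \<alpha> t n j + 1 / (ratio t k * (1 + ratio t k)) * zeta \<alpha> t n (j + 1)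
         - 1 / (1 + ratio t (k + 1)) * zeta \<alpha> t n j))"

text \<open>Auxiliary kernels A^{(n)}_{n-k}, indexed by j = n - k\<close>
definition Akern :: "real \<Rightarrow> (nat \<Rightarrow> real) \<Rightarrow> nat \<Rightarrow> nat \<Rightarrow> real" where
  "Akern \<alpha> t n j = (if j = 0 then 2 * ahat \<alpha> t n 0 else ahat \<alpha> t n j)"

definition rstar_eq :: "real \<Rightarrow> real \<Rightarrow> real" where
  "rstar_eq \<alpha> r = 2 * sqrt (2 * (1 - \<alpha>/2) * r / (1 + \<alpha> + (1 - \<alpha>/2) * r) + r / (1 + r))
      + 3 - 1 / (r^2 * (1 + r))"

definition rstar :: "real \<Rightarrow> real" where
  "rstar \<alpha> = (THE r. r > 0 \<and> rstar_eq \<alpha> r = 0)"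

end

theory Submission
  imports Defs
begin


lemma rstar_eq_mono:
  fixes \<alpha> r1 r2 :: real
  assumes "0 < \<alpha>" "\<alpha> < 1" "0 < r1" "r1 < r2"
  shows "rstar_eq \<alpha> r1 < rstar_eq \<alpha> r2"
proof -
  define c where "c = 1 - \<alpha>/2"
  have c: "c > 0" using assms by (simp add: c_def)
  have d1: "1 + \<alpha> + c * r1 > 0" "1 + \<alpha> + c * r2 > 0" using assms c by (auto intro!: add_pos_pos)
  have "c * r1 * (1 + \<alpha>) \<le> c * r2 * (1 + \<alpha>)" using assms c by (intro mult_right_mono) auto
  then have "(2 * c * r1) * (1 + \<alpha> + c * r2) \<le> (2 * c * r2) * (1 + \<alpha> + c * r1)"
    by (simp add: algebra_simps)
  then have m1: "2 * c * r1 / (1 + \<alpha> + c * r1) \<le> 2 * c * r2 / (1 + \<alpha> + c * r2)"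
    using d1 by (simp add: divide_simps)
  have m2: "r1 / (1 + r1) \<le> r2 / (1 + r2)"
    using assms by (simp add: divide_simps algebra_simps)
  have s: "sqrt (2 * c * r1 / (1 + \<alpha> + c * r1) + r1 / (1 + r1))
      \<le> sqrt (2 * c * r2 / (1 + \<alpha> + c * r2) + r2 / (1 + r2))"
    using m1 m2 by (intro real_sqrt_le_mono) linarith
  have p: "r1^2 * (1 + r1) < r2^2 * (1 + r2)"
    using assms by (intro mult_strict_mono power_strict_mono) auto
  have "1 / (r2^2 * (1 + r2)) < 1 / (r1^2 * (1 + r1))"
    using p assms by (intro divide_strict_left_mono) auto
  then show ?thesis using s unfolding rstar_eq_def c_def[symmetric] by linarith
qed

lemma rstar_eq_neg:
  fixes \<alpha> :: real
  assumes "0 < \<alpha>" "\<alpha> < 1"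
  shows "rstar_eq \<alpha> (385/1000) < 0"
proof -
  define r :: real where "r = 385/1000"
  define c where "c = 1 - \<alpha>/2"
  have c: "c > 0" "c \<le> 1" using assms by (auto simp: c_def)
  have m1: "2 * c * r / (1 + \<alpha> + c * r) \<le> 2 * r / (1 + r)"
  proof -
    have d: "1 + \<alpha> + c * r > 0" using c assms by (auto simp: r_def intro!: add_pos_pos)
    have "c * r \<le> r * (1 + \<alpha>)" using c assms by (simp add: r_def)
    then have "(c * r) * (1 + r) \<le> r * (1 + \<alpha> + c * r)" by (simp add: algebra_simps)
    then have "c * r / (1 + \<alpha> + c * r) \<le> r / (1 + r)"
      using d by (simp add: divide_simps r_def)
    then show ?thesis by (simp add: mult.assoc)
  qed
  have "sqrt (2 * c * r / (1 + \<alpha> + c * r) + r / (1 + r)) \<le> sqrt (3 * r / (1 + r))"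
    using m1 by (intro real_sqrt_le_mono) (simp add: r_def)
  also have "\<dots> \<le> 914/1000"
    by (rule real_le_lsqrt) (auto simp: r_def power2_eq_square)
  finally have "sqrt (2 * c * r / (1 + \<alpha> + c * r) + r / (1 + r)) \<le> 914/1000" .
  moreover have "1 / (r^2 * (1 + r)) > 2 * (914/1000) + 3" by (simp add: r_def power2_eq_square)
  ultimately show ?thesis unfolding rstar_eq_def c_def[symmetric] r_def[symmetric]
    by linarith
qed

lemma rstar_eq_pos:
  fixes \<alpha> :: real
  assumes "0 < \<alpha>" "\<alpha> < 1"
  shows "rstar_eq \<alpha> (1/2) > 0"
proof -
  have "sqrt (2 * (1 - \<alpha>/2) * (1/2) / (1 + \<alpha> + (1 - \<alpha>/2) * (1/2)) + (1/2) / (1 + 1/2)) \<ge> 0"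
    using assms by (intro real_sqrt_ge_zero add_nonneg_nonneg divide_nonneg_pos) (auto simp: algebra_simps)
  moreover have "1 / ((1/2::real)^2 * (1 + 1/2)) < 3" by (simp add: power2_eq_square)
  ultimately show ?thesis unfolding rstar_eq_def by linarith
qed

lemma rstar_eq_cont:
  fixes \<alpha> :: real
  assumes "0 < \<alpha>" "\<alpha> < 1"
  shows "continuous_on {385/1000..1/2} (rstar_eq \<alpha>)"
proof (rule continuous_at_imp_continuous_on, rule ballI)
  fix x :: real assume "x \<in> {385/1000..1/2}"
  then have x: "x > 0" by auto
  have "(1 - \<alpha>/2) * x > 0" using x assms by auto
  then have d: "1 + \<alpha> + (1 - \<alpha>/2) * x \<noteq> 0" using assms by linarith
  have d2: "1 + x \<noteq> 0" "x^2 * (1 + x) \<noteq> 0" using x by auto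
  show "isCont (rstar_eq \<alpha>) x" unfolding rstar_eq_def[abs_def]
    using d d2 by (intro continuous_intros) auto
qed

lemma rstar_gt:
  fixes \<alpha> :: real
  assumes "0 < \<alpha>" "\<alpha> < 1"
  shows "rstar \<alpha> > 385/1000"
proof -
  obtain x where x: "385/1000 \<le> x" "x \<le> 1/2" "rstar_eq \<alpha> x = 0"
    using IVT'[of "rstar_eq \<alpha>" "385/1000" 0 "1/2"] rstar_eq_neg[OF assms] rstar_eq_pos[OF assms]
      rstar_eq_cont[OF assms] by force
  have uniq: "y = x" if "y > 0" "rstar_eq \<alpha> y = 0" for y
    using rstar_eq_mono[OF assms, of y x] rstar_eq_mono[OF assms, of x y] x that
    by (cases "y < x"; cases "x < y") auto
  have "rstar \<alpha> = x" unfolding rstar_def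
    by (rule the_equality) (use x uniq in auto)
  moreover have "x \<noteq> 385/1000"
  proof
    assume "x = 385/1000"
    then have "rstar_eq \<alpha> (385/1000) = 0" using x(3) by (simp only:)
    then show False using rstar_eq_neg[OF assms] by simp
  qed
  ultimately show ?thesis using x by auto
qed


definition Av :: "(real \<Rightarrow> real) \<Rightarrow> real \<Rightarrow> real \<Rightarrow> real" where
  "Av \<phi> a b = integral {a..b} \<phi> / (b - a)"

definition Zt :: "(real \<Rightarrow> real) \<Rightarrow> real \<Rightarrow> real \<Rightarrow> real" where
  "Zt \<phi> a b = 2 / (b - a)^2 * integral {a..b} (\<lambda>s. (s - (a + b) / 2) * \<phi> s)"

definition MV :: "(real \<Rightarrow> real) \<Rightarrow> (real \<Rightarrow> real) \<Rightarrow> real \<Rightarrow> real \<Rightarrow> bool" where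
  "MV \<phi> \<phi>' a b \<longleftrightarrow> continuous_on {a..b} \<phi> \<and>
     (\<forall>x y. a \<le> x \<longrightarrow> x \<le> y \<longrightarrow> y \<le> b \<longrightarrow>
        \<phi>' x * (y - x) \<le> \<phi> y - \<phi> x \<and> \<phi> y - \<phi> x \<le> \<phi>' y * (y - x))"

lemma ftc_real:
  fixes G g :: "real \<Rightarrow> real"
  assumes "a \<le> b" "\<And>x. (G has_real_derivative g x) (at x)"
  shows "(g has_integral (G b - G a)) {a..b}"
  using assms
  by (intro fundamental_theorem_of_calculus)
     (auto simp: has_real_derivative_iff_has_vector_derivative[symmetric] intro: has_field_derivative_at_within)

lemma MV_cont: "MV \<phi> \<phi>' a b \<Longrightarrow> continuous_on {a..b} \<phi>"
  by (simp add: MV_def)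

lemma MV_le: "MV \<phi> \<phi>' a b \<Longrightarrow> a \<le> x \<Longrightarrow> x \<le> y \<Longrightarrow> y \<le> b \<Longrightarrow> \<phi>' x * (y - x) \<le> \<phi> y - \<phi> x"
  by (simp add: MV_def)

lemma MV_ge: "MV \<phi> \<phi>' a b \<Longrightarrow> a \<le> x \<Longrightarrow> x \<le> y \<Longrightarrow> y \<le> b \<Longrightarrow> \<phi> y - \<phi> x \<le> \<phi>' y * (y - x)"
  by (simp add: MV_def)

lemma MV_sub: "MV \<phi> \<phi>' a b \<Longrightarrow> a \<le> c \<Longrightarrow> d \<le> b \<Longrightarrow> MV \<phi> \<phi>' c d"
  unfolding MV_def by (auto intro: continuous_on_subset)

lemma MV_dmono: assumes "MV \<phi> \<phi>' a b" "a \<le> x" "x \<le> y" "y \<le> b" shows "\<phi>' x \<le> \<phi>' y"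
proof (cases "x = y")
  case False
  then have "x < y" using assms by auto
  have "\<phi>' x * (y - x) \<le> \<phi>' y * (y - x)"
    using MV_le[OF assms] MV_ge[OF assms] by linarith
  then show ?thesis using \<open>x < y\<close> by simp
qed simp

lemma MV_intro:
  assumes "a \<le> b"
    and der: "\<And>x. a \<le> x \<Longrightarrow> x \<le> b \<Longrightarrow> (\<phi> has_real_derivative \<phi>' x) (at x)"
    and mono: "\<And>x y. a \<le> x \<Longrightarrow> x \<le> y \<Longrightarrow> y \<le> b \<Longrightarrow> \<phi>' x \<le> \<phi>' y"
  shows "MV \<phi> \<phi>' a b"
  unfolding MV_def
proof (intro conjI allI impI)
  show "continuous_on {a..b} \<phi>"
    using der by (intro continuous_at_imp_continuous_on ballI) (meson DERIV_isCont atLeastAtMost_iff)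
next
  fix x y assume xy: "a \<le> x" "x \<le> y" "y \<le> b"
  have "\<phi>' x * (y - x) \<le> \<phi> y - \<phi> x \<and> \<phi> y - \<phi> x \<le> \<phi>' y * (y - x)"
  proof (cases "x = y")
    case False
    then have "x < y" using xy by auto
    obtain z where z: "x < z" "z < y" "\<phi> y - \<phi> x = (y - x) * \<phi>' z"
      using MVT2[OF \<open>x < y\<close>, of \<phi> \<phi>'] der xy by force
    have "\<phi>' x \<le> \<phi>' z" "\<phi>' z \<le> \<phi>' y" using mono xy z by auto
    then show ?thesis using z \<open>x < y\<close> by (auto simp: mult.commute intro: mult_right_mono)
  qed simp
  then show "\<phi>' x * (y - x) \<le> \<phi> y - \<phi> x" "\<phi> y - \<phi> x \<le> \<phi>' y * (y - x)" by auto
qed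

lemma MV_integrable: "MV \<phi> \<phi>' a b \<Longrightarrow> \<phi> integrable_on {a..b}"
  by (intro integrable_continuous_interval MV_cont)

lemma MV_integrable_w: "MV \<phi> \<phi>' a b \<Longrightarrow> (\<lambda>s. (s - m) * \<phi> s) integrable_on {a..b}"
  by (intro integrable_continuous_interval continuous_intros MV_cont)

lemma Av_chord:
  assumes mv: "MV \<phi> \<phi>' a b" and ab: "a < b"
  shows "Av \<phi> a b \<le> (\<phi> a + \<phi> b) / 2"
proof -
  define L where "L = b - a"
  have L: "L > 0" using ab by (simp add: L_def)
  have pw: "\<phi> s \<le> \<phi> a + (\<phi> b - \<phi> a) / L * (s - a)" if s: "s \<in> {a..b}" for s
  proof -
    have s1: "a \<le> s" "s \<le> b" using s by auto
    have A: "\<phi> s - \<phi> a \<le> \<phi>' s * (s - a)" using MV_ge[OF mv _ s1] by simp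
    have B: "\<phi>' s * (b - s) \<le> \<phi> b - \<phi> s" using MV_le[OF mv s1(1) s1(2) order_refl] by simp
    have "(\<phi> s - \<phi> a) * (b - s) \<le> \<phi>' s * (s - a) * (b - s)"
      using A s1 by (intro mult_right_mono) auto
    also have "\<dots> = \<phi>' s * (b - s) * (s - a)" by simp
    also have "\<dots> \<le> (\<phi> b - \<phi> s) * (s - a)"
      using B s1 by (intro mult_right_mono) auto
    finally have "(\<phi> s - \<phi> a) * (b - s) \<le> (\<phi> b - \<phi> s) * (s - a)" .
    then have "\<phi> s * L \<le> \<phi> a * L + (\<phi> b - \<phi> a) * (s - a)"
      by (simp add: L_def algebra_simps)
    then show ?thesis using L by (simp add: field_simps)
  qed
  define k where "k = (\<phi> b - \<phi> a) / L"
  have kL: "k * L = \<phi> b - \<phi> a" using L by (simp add: k_def)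
  have I: "((\<lambda>s. \<phi> a + k * (s - a)) has_integral
      ((\<lambda>s. \<phi> a * s + k * (s - a)^2 / 2) b - (\<lambda>s. \<phi> a * s + k * (s - a)^2 / 2) a)) {a..b}"
    using ab by (intro ftc_real) (auto intro!: derivative_eq_intros simp: power2_eq_square field_simps)
  have "integral {a..b} \<phi> \<le> (\<lambda>s. \<phi> a * s + k * (s - a)^2 / 2) b - (\<lambda>s. \<phi> a * s + k * (s - a)^2 / 2) a"
    using has_integral_le[OF integrable_integral[OF MV_integrable[OF mv]] I] pw unfolding k_def by blast
  also have "\<dots> = \<phi> a * L + (k * L) * L / 2" by (simp add: L_def power2_eq_square algebra_simps)
  also have "\<dots> = L * (\<phi> a + \<phi> b) / 2" unfolding kL by (simp add: field_simps)
  finally show ?thesis using L unfolding Av_def L_def[symmetric] by (simp add: field_simps)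
qed


lemma aux_L: "L > 0 \<Longrightarrow> 2 / L^2 * (c * L^3 / 12) = c * L / (6::real)"
  by (simp add: power2_eq_square power3_eq_cube field_simps)

lemma sq_integral:
  fixes a b K c :: real
  assumes "a \<le> b"
  shows "((\<lambda>s. (s - (a+b)/2) * K + c * (s - (a+b)/2)^2) has_integral (c * (b - a)^3 / 12)) {a..b}"
proof -
  define G where "G = (\<lambda>s. K * (s - (a+b)/2)^2 / 2 + c * (s - (a+b)/2)^3 / 3)"
  have H: "((\<lambda>s. (s - (a+b)/2) * K + c * (s - (a+b)/2)^2) has_integral (G b - G a)) {a..b}"
    unfolding G_def using assms
    by (intro ftc_real) (auto intro!: derivative_eq_intros simp: power2_eq_square power3_eq_cube field_simps)
  have eq: "G b - G a = c * (b - a)^3 / 12"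
    unfolding G_def by (simp add: power2_eq_square power3_eq_cube field_simps)
  show ?thesis using H eq by simp
qed

lemma Zt_lower_gen:
  assumes "a < b" and int: "(\<lambda>s. (s - (a+b)/2) * \<phi> s) integrable_on {a..b}"
    and pw: "\<And>s. s \<in> {a..b} \<Longrightarrow> (s - (a+b)/2) * K + c * (s - (a+b)/2)^2 \<le> (s - (a+b)/2) * \<phi> s"
  shows "c * (b - a) / 6 \<le> Zt \<phi> a b"
proof -
  have "c * (b - a)^3 / 12 \<le> integral {a..b} (\<lambda>s. (s - (a+b)/2) * \<phi> s)"
    using has_integral_le[OF sq_integral[of a b K c] integrable_integral[OF int]] pw \<open>a < b\<close> by auto
  then have "2 / (b-a)^2 * (c * (b - a)^3 / 12) \<le> Zt \<phi> a b"
    unfolding Zt_def using \<open>a < b\<close> by (intro mult_left_mono) auto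
  then show ?thesis using aux_L[of "b - a" c] \<open>a < b\<close> by simp
qed

lemma Zt_upper_gen:
  assumes "a < b" and int: "(\<lambda>s. (s - (a+b)/2) * \<phi> s) integrable_on {a..b}"
    and pw: "\<And>s. s \<in> {a..b} \<Longrightarrow> (s - (a+b)/2) * \<phi> s \<le> (s - (a+b)/2) * K + c * (s - (a+b)/2)^2"
  shows "Zt \<phi> a b \<le> c * (b - a) / 6"
proof -
  have "integral {a..b} (\<lambda>s. (s - (a+b)/2) * \<phi> s) \<le> c * (b - a)^3 / 12"
    using has_integral_le[OF integrable_integral[OF int] sq_integral[of a b K c]] pw \<open>a < b\<close> by auto
  then have "Zt \<phi> a b \<le> 2 / (b-a)^2 * (c * (b - a)^3 / 12)"
    unfolding Zt_def using \<open>a < b\<close> by (intro mult_left_mono) auto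
  then show ?thesis using aux_L[of "b - a" c] \<open>a < b\<close> by simp
qed

lemma Zt_lower:
  assumes mv: "MV \<phi> \<phi>' a b" and ab: "a < b"
  shows "\<phi>' a * (b - a) / 6 \<le> Zt \<phi> a b"
proof (rule Zt_lower_gen[OF ab MV_integrable_w[OF mv], where K = "\<phi> ((a+b)/2)"])
  fix s assume s: "s \<in> {a..b}"
  define m where "m = (a+b)/2"
  have m: "a \<le> m" "m \<le> b" using ab by (auto simp: m_def)
  have key: "(s - m) * (\<phi>' a * (s - m)) \<le> (s - m) * (\<phi> s - \<phi> m)"
  proof (cases "m \<le> s")
    case True
    have "\<phi>' a \<le> \<phi>' m" using MV_dmono[OF mv order_refl m(1) m(2)] .
    then have "\<phi>' a * (s - m) \<le> \<phi>' m * (s - m)" using True by (intro mult_right_mono) auto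
    also have "\<dots> \<le> \<phi> s - \<phi> m" using MV_le[OF mv m(1) True] s by auto
    finally show ?thesis using True by (intro mult_left_mono) auto
  next
    case False
    have "\<phi>' a \<le> \<phi>' s" using MV_dmono[OF mv order_refl] s by auto
    then have "\<phi>' a * (m - s) \<le> \<phi>' s * (m - s)" using False by (intro mult_right_mono) auto
    also have "\<dots> \<le> \<phi> m - \<phi> s" using MV_le[OF mv, of s m] s False m by auto
    finally have "(m - s) * (\<phi>' a * (m - s)) \<le> (m - s) * (\<phi> m - \<phi> s)"
      using False by (intro mult_left_mono) auto
    then show ?thesis by (simp add: algebra_simps)
  qed
  have e1: "(s - m) * (\<phi>' a * (s - m)) = \<phi>' a * (s - m)^2" by (simp add: power2_eq_square)
  have e2: "(s - m) * (\<phi> s - \<phi> m) = (s - m) * \<phi> s - (s - m) * \<phi> m" by (simp add: algebra_simps)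
  have "(s - m) * \<phi> m + \<phi>' a * (s - m)^2 \<le> (s - m) * \<phi> s" using key e1 e2 by linarith
  then show "(s - (a+b)/2) * \<phi> ((a+b)/2) + \<phi>' a * (s - (a+b)/2)^2 \<le> (s - (a+b)/2) * \<phi> s"
    by (simp add: m_def)
qed

lemma Zt_upper:
  assumes mv: "MV \<phi> \<phi>' a b" and ab: "a < b"
  shows "Zt \<phi> a b \<le> \<phi>' b * (b - a) / 6"
proof (rule Zt_upper_gen[OF ab MV_integrable_w[OF mv], where K = "\<phi> ((a+b)/2)"])
  fix s assume s: "s \<in> {a..b}"
  define m where "m = (a+b)/2"
  have m: "a \<le> m" "m \<le> b" using ab by (auto simp: m_def)
  have key: "(s - m) * (\<phi> s - \<phi> m) \<le> (s - m) * (\<phi>' b * (s - m))"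
  proof (cases "m \<le> s")
    case True
    have "\<phi> s - \<phi> m \<le> \<phi>' s * (s - m)" using MV_ge[OF mv m(1) True] s by auto
    also have "\<dots> \<le> \<phi>' b * (s - m)"
      using MV_dmono[OF mv _ _ order_refl, of s] s m True by (intro mult_right_mono) auto
    finally show ?thesis using True by (intro mult_left_mono) auto
  next
    case False
    have "\<phi> m - \<phi> s \<le> \<phi>' m * (m - s)" using MV_ge[OF mv, of s m] s False m by auto
    also have "\<dots> \<le> \<phi>' b * (m - s)"
      using MV_dmono[OF mv m(1) m(2) order_refl] False by (intro mult_right_mono) auto
    finally have "(m - s) * (\<phi> m - \<phi> s) \<le> (m - s) * (\<phi>' b * (m - s))"
      using False by (intro mult_left_mono) auto
    then show ?thesis by (simp add: algebra_simps)
  qed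
  have e1: "(s - m) * (\<phi>' b * (s - m)) = \<phi>' b * (s - m)^2" by (simp add: power2_eq_square)
  have e2: "(s - m) * (\<phi> s - \<phi> m) = (s - m) * \<phi> s - (s - m) * \<phi> m" by (simp add: algebra_simps)
  have "(s - m) * \<phi> s \<le> (s - m) * \<phi> m + \<phi>' b * (s - m)^2" using key e1 e2 by linarith
  then show "(s - (a+b)/2) * \<phi> s \<le> (s - (a+b)/2) * \<phi> ((a+b)/2) + \<phi>' b * (s - (a+b)/2)^2"
    by (simp add: m_def)
qed


lemma aux_L2: "L > 0 \<Longrightarrow> 2 / L^2 * (A * L^2 / 2 + B * L^3 / 6) = A + B * L / (3::real)"
  by (simp add: power2_eq_square power3_eq_cube field_simps)

lemma AvZt_lower:
  assumes mv: "MV \<phi> \<phi>' a b" and ab: "a < b"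
  shows "\<phi> a + \<phi>' a * (b - a) / 3 \<le> Av \<phi> a b - Zt \<phi> a b"
proof -
  define L where "L = b - a"
  have L: "L > 0" using ab by (simp add: L_def)
  define I1 where "I1 = integral {a..b} \<phi>"
  define I2 where "I2 = integral {a..b} (\<lambda>s. (s - (a+b)/2) * \<phi> s)"
  have H1: "(\<phi> has_integral I1) {a..b}" unfolding I1_def using MV_integrable[OF mv] by auto
  have H2: "((\<lambda>s. (s - (a+b)/2) * \<phi> s) has_integral I2) {a..b}"
    unfolding I2_def using MV_integrable_w[OF mv] by auto
  have H: "((\<lambda>s. L/2 * \<phi> s - (s - (a+b)/2) * \<phi> s) has_integral (L/2 * I1 - I2)) {a..b}"
    by (intro has_integral_diff has_integral_mult_right H1 H2)
  have fe: "(\<lambda>s. L/2 * \<phi> s - (s - (a+b)/2) * \<phi> s) = (\<lambda>s. \<phi> s * (b - s))"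
    by (rule ext) (simp add: L_def field_simps)
  define G where "G = (\<lambda>s. \<phi> a * (b * s - s^2/2) + \<phi>' a * (L * (s - a)^2 / 2 - (s - a)^3 / 3))"
  have HG: "((\<lambda>s. (\<phi> a + \<phi>' a * (s - a)) * (b - s)) has_integral (G b - G a)) {a..b}"
    unfolding G_def using ab
    by (intro ftc_real) (auto intro!: derivative_eq_intros simp: power2_eq_square power3_eq_cube L_def field_simps)
  have Gv: "G b - G a = \<phi> a * L^2 / 2 + \<phi>' a * L^3 / 6"
    unfolding G_def by (simp add: L_def power2_eq_square power3_eq_cube field_simps)
  have pw: "(\<phi> a + \<phi>' a * (s - a)) * (b - s) \<le> \<phi> s * (b - s)" if s: "s \<in> {a..b}" for s
  proof -
    have "\<phi>' a * (s - a) \<le> \<phi> s - \<phi> a" using MV_le[OF mv order_refl] s by auto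
    then show ?thesis using s by (intro mult_right_mono) auto
  qed
  have "G b - G a \<le> L/2 * I1 - I2"
    using has_integral_le[OF HG H[unfolded fe]] pw by blast
  then have "2 / L^2 * (\<phi> a * L^2 / 2 + \<phi>' a * L^3 / 6) \<le> 2 / L^2 * (L/2 * I1 - I2)"
    unfolding Gv using L by (intro mult_left_mono) auto
  also have "2 / L^2 * (L/2 * I1 - I2) = Av \<phi> a b - Zt \<phi> a b"
    unfolding Av_def Zt_def I1_def[symmetric] I2_def[symmetric] L_def[symmetric]
    using L by (simp add: power2_eq_square field_simps)
  finally have X: "2 / L^2 * (\<phi> a * L^2 / 2 + \<phi>' a * L^3 / 6) \<le> Av \<phi> a b - Zt \<phi> a b" .
  have e: "2 / L^2 * (\<phi> a * L^2 / 2 + \<phi>' a * L^3 / 6) = \<phi> a + \<phi>' a * L / 3" by (rule aux_L2[OF L])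
  from X e have "\<phi> a + \<phi>' a * L / 3 \<le> Av \<phi> a b - Zt \<phi> a b" by linarith
  then show ?thesis by (simp add: L_def)
qed

lemma Av_two_chord:
  assumes mv: "MV \<phi> \<phi>' a b" and ab: "a < b"
  shows "Av \<phi> a b \<le> (\<phi> a + 2 * \<phi> ((a+b)/2) + \<phi> b) / 4"
proof -
  define m where "m = (a+b)/2"
  have m: "a < m" "m < b" using ab by (auto simp: m_def)
  have c1: "Av \<phi> a m \<le> (\<phi> a + \<phi> m) / 2" using Av_chord[OF MV_sub[OF mv order_refl] m(1)] m by auto
  have c2: "Av \<phi> m b \<le> (\<phi> m + \<phi> b) / 2" using Av_chord[OF MV_sub[OF mv _ order_refl] m(2)] m by auto
  have comb: "integral {a..m} \<phi> + integral {m..b} \<phi> = integral {a..b} \<phi>"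
    by (rule Henstock_Kurzweil_Integration.integral_combine) (use m MV_integrable[OF mv] in auto)
  have e1: "m - a = (b - a)/2" "b - m = (b - a)/2" by (auto simp: m_def field_simps)
  define I1 where "I1 = integral {a..m} \<phi>"
  define I2 where "I2 = integral {m..b} \<phi>"
  define L where "L = b - a"
  have L: "L > 0" using ab by (simp add: L_def)
  have "Av \<phi> a b = (Av \<phi> a m + Av \<phi> m b) / 2"
    unfolding Av_def comb[symmetric] e1 I1_def[symmetric] I2_def[symmetric] L_def[symmetric]
    using L by (simp add: field_simps)
  then show ?thesis using c1 c2 unfolding m_def by simp
qed

lemma Av_diff:
  assumes "f integrable_on {a..b}" "g integrable_on {a..b}"
  shows "Av (\<lambda>s. f s - g s) a b = Av f a b - Av g a b"
  unfolding Av_def using integral_diff[OF assms] by (simp add: diff_divide_distrib)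

lemma Zt_diff:
  assumes "(\<lambda>s. (s - (a+b)/2) * f s) integrable_on {a..b}" "(\<lambda>s. (s - (a+b)/2) * g s) integrable_on {a..b}"
  shows "Zt (\<lambda>s. f s - g s) a b = Zt f a b - Zt g a b"
proof -
  define m where "m = (a+b)/2"
  have fe: "(\<lambda>s. (s - m) * (f s - g s)) = (\<lambda>s. (s - m) * f s - (s - m) * g s)"
    by (rule ext) (simp add: algebra_simps)
  have "integral {a..b} (\<lambda>s. (s - m) * (f s - g s))
      = integral {a..b} (\<lambda>s. (s - m) * f s) - integral {a..b} (\<lambda>s. (s - m) * g s)"
    unfolding fe using assms unfolding m_def[symmetric] by (rule integral_diff)
  then show ?thesis unfolding Zt_def m_def[symmetric] by (simp only: right_diff_distrib)
qed


lemma Zt_nonneg: "MV \<phi> \<phi>' a b \<Longrightarrow> a < b \<Longrightarrow> 0 \<le> \<phi>' a \<Longrightarrow> 0 \<le> Zt \<phi> a b"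
  using Zt_lower[of \<phi> \<phi>' a b] by (smt (verit) divide_nonneg_pos mult_nonneg_nonneg)

lemma pos_AZ:
  assumes mv: "MV \<phi> \<phi>' a b" and ab: "a < b" and p: "\<phi> a > 0" "\<phi>' a \<ge> 0" and r: "r > 0"
  shows "Av \<phi> a b - Zt \<phi> a b / (1 + r) > 0"
proof -
  have z: "0 \<le> Zt \<phi> a b" using Zt_nonneg[OF mv ab p(2)] .
  have "Zt \<phi> a b * r \<ge> 0" using z r by simp
  then have "Zt \<phi> a b \<le> Zt \<phi> a b * (1 + r)" by (simp add: algebra_simps)
  then have "Zt \<phi> a b / (1 + r) \<le> Zt \<phi> a b" using r by (simp add: divide_le_eq)
  moreover have "\<phi> a + \<phi>' a * (b - a) / 3 \<le> Av \<phi> a b - Zt \<phi> a b" using AvZt_lower[OF mv ab] .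
  moreover have "\<phi>' a * (b - a) / 3 \<ge> 0" using p ab by simp
  ultimately show ?thesis using p by linarith
qed

lemma Z_left:
  assumes mv: "MV \<phi> \<phi>' x0 x1" and x: "x0 < x1" "x1 < x2" and r: "r = (x2 - x1) / (x1 - x0)"
  shows "Zt \<phi> x0 x1 / (r * (1 + r)) \<le> \<phi>' x1 * (x2 - x1) / (6 * r^2 * (1 + r))"
proof -
  have rp: "r > 0" using x r by simp
  have "Zt \<phi> x0 x1 \<le> \<phi>' x1 * (x1 - x0) / 6" using Zt_upper[OF mv x(1)] .
  also have "x1 - x0 = (x2 - x1) / r" unfolding r using x by (simp add: field_simps)
  finally have "Zt \<phi> x0 x1 \<le> \<phi>' x1 * ((x2 - x1) / r) / 6" .
  then have "Zt \<phi> x0 x1 / (r * (1 + r)) \<le> \<phi>' x1 * ((x2 - x1) / r) / 6 / (r * (1 + r))"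
    using rp by (intro divide_right_mono) auto
  also have "\<dots> = \<phi>' x1 * (x2 - x1) / (6 * r^2 * (1 + r))"
    using rp by (simp add: power2_eq_square field_simps)
  finally show ?thesis .
qed

lemma core_mono:
  assumes mv: "MV \<phi> \<phi>' x1 x3" and x: "x1 < x2" "x2 < x3" and d: "\<phi>' x1 \<ge> 0"
    and p: "0 \<le> p" "p \<le> 1" and r': "r' = (x3 - x2) / (x2 - x1)"
  shows "(Av \<phi> x2 x3 + Zt \<phi> x1 x2 / (r' * (1 + r')) - p * Zt \<phi> x2 x3) - (Av \<phi> x1 x2 - Zt \<phi> x1 x2 / (1 + r'))
      \<ge> \<phi>' x1 * (x2 - x1) * (1/2 + r'/3 + 1 / (6 * r'))"
proof -
  define P where "P = \<phi>' x1 * (x2 - x1)"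
  have rp: "r' > 0" using x r' by simp
  have mv1: "MV \<phi> \<phi>' x1 x2" using MV_sub[OF mv order_refl] x by auto
  have mv2: "MV \<phi> \<phi>' x2 x3" using MV_sub[OF mv _ order_refl] x by auto
  have d2: "\<phi>' x1 \<le> \<phi>' x2" using MV_dmono[OF mv order_refl] x by auto
  have Z3: "0 \<le> Zt \<phi> x2 x3" using Zt_nonneg[OF mv2 x(2)] d d2 by auto
  have "p * Zt \<phi> x2 x3 \<le> Zt \<phi> x2 x3" using p Z3 by (simp add: mult_left_le_one_le)
  have A3: "\<phi> x2 + \<phi>' x2 * (x3 - x2) / 3 \<le> Av \<phi> x2 x3 - Zt \<phi> x2 x3" using AvZt_lower[OF mv2 x(2)] .
  have "\<phi>' x1 * (x3 - x2) \<le> \<phi>' x2 * (x3 - x2)" using d2 x by (intro mult_right_mono) auto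
  moreover have "\<phi>' x1 * (x3 - x2) = P * r'" unfolding r' P_def using x by (simp add: field_simps)
  ultimately have A3': "P * r' / 3 \<le> \<phi>' x2 * (x3 - x2) / 3" by simp
  have A2: "Av \<phi> x1 x2 \<le> (\<phi> x1 + \<phi> x2) / 2" using Av_chord[OF mv1 x(1)] .
  have D12: "P \<le> \<phi> x2 - \<phi> x1" using MV_le[OF mv order_refl, of x2] x by (auto simp: P_def)
  have Z2: "P / 6 \<le> Zt \<phi> x1 x2" using Zt_lower[OF mv1 x(1)] by (simp add: P_def)
  have Z2': "Zt \<phi> x1 x2 / (r' * (1 + r')) + Zt \<phi> x1 x2 / (1 + r') = Zt \<phi> x1 x2 / r'"
  proof -
    have h: "1 + r' \<noteq> 0" "r' \<noteq> 0" using rp by auto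
    have "Zt \<phi> x1 x2 / (r' * (1 + r')) + Zt \<phi> x1 x2 / (1 + r') = Zt \<phi> x1 x2 * (1 + r') / (r' * (1 + r'))"
      using h by (simp add: add_divide_distrib[symmetric] divide_simps) (simp add: algebra_simps)
    also have "\<dots> = Zt \<phi> x1 x2 / r'" using h by simp
    finally show ?thesis .
  qed
  have "P / 6 / r' \<le> Zt \<phi> x1 x2 / r'" using Z2 rp by (intro divide_right_mono) auto
  then have Z2'': "P / (6 * r') \<le> Zt \<phi> x1 x2 / r'" by simp
  have "P * (1/2 + r'/3 + 1 / (6 * r')) = P / 2 + P * r' / 3 + P / (6 * r')" by (simp add: field_simps)
  then have "(Av \<phi> x2 x3 + Zt \<phi> x1 x2 / (r' * (1 + r')) - p * Zt \<phi> x2 x3) - (Av \<phi> x1 x2 - Zt \<phi> x1 x2 / (1 + r'))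
      \<ge> P * (1/2 + r'/3 + 1 / (6 * r'))"
  proof -
    define U where "U = P / (6 * r')"
    define V where "V = P * r' / 3"
    have "P * (1/2 + r'/3 + 1 / (6 * r')) = P / 2 + V + U" unfolding U_def V_def using rp by (simp add: field_simps)
    moreover have "P / 2 + V + U \<le> (Av \<phi> x2 x3 + Zt \<phi> x1 x2 / (r' * (1 + r')) - p * Zt \<phi> x2 x3) - (Av \<phi> x1 x2 - Zt \<phi> x1 x2 / (1 + r'))"
    proof -
      define Zq where "Zq = Zt \<phi> x1 x2 / (r' * (1 + r'))"
      define Zs where "Zs = Zt \<phi> x1 x2 / (1 + r')"
      define Zr where "Zr = Zt \<phi> x1 x2 / r'"
      define W where "W = \<phi>' x2 * (x3 - x2) / 3"
      define pZ where "pZ = p * Zt \<phi> x2 x3"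
      show ?thesis
        using \<open>p * Zt \<phi> x2 x3 \<le> Zt \<phi> x2 x3\<close>[folded pZ_def] A3[folded W_def] A3'[folded V_def W_def] A2 D12
          Z2'[folded Zq_def Zs_def Zr_def] Z2''[folded U_def Zr_def]
        unfolding Zq_def[symmetric] Zs_def[symmetric] pZ_def[symmetric] by argo
    qed
    ultimately show ?thesis by linarith
  qed
  then show ?thesis by (simp add: P_def)
qed

lemma ratio_bound1:
  fixes r :: real assumes "r \<ge> 385/1000"
  shows "1 / (6 * r^2 * (1 + r)) \<le> 8122/10000"
proof -
  have "(385/1000::real)^2 * (1 + 385/1000) \<le> r^2 * (1 + r)"
    using assms by (intro mult_mono power_mono) auto
  then have le: "6 * ((385/1000::real)^2 * (1 + 385/1000)) \<le> 6 * r^2 * (1 + r)" by linarith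
  have pos: "6 * ((385/1000::real)^2 * (1 + 385/1000)) > 0" by simp
  have "0 < 6 * r^2 * (1 + r)" using assms by simp
  then have "0 < (6 * r^2 * (1 + r)) * (6 * ((385/1000::real)^2 * (1 + 385/1000)))" using pos by (rule mult_pos_pos)
  then have "1 / (6 * r^2 * (1 + r)) \<le> 1 / (6 * ((385/1000::real)^2 * (1 + 385/1000)))"
    by (intro divide_left_mono[OF le]) auto
  also have "\<dots> \<le> 8122/10000" by (simp add: power2_eq_square)
  finally show ?thesis .
qed

lemma ratio_bound2:
  fixes r :: real assumes "r > 0"
  shows "r/3 + 1 / (6 * r) \<ge> 466/1000"
proof -
  have "2 * r^2 - 2796/1000 * r + 1 \<ge> 0"
  proof -
    have "2 * (r - 699/1000)^2 \<ge> 0" by simp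
    then show ?thesis by (simp add: power2_eq_square algebra_simps)
  qed
  then have "(2 * r^2 + 1) / (6 * r) \<ge> 466/1000" using assms by (simp add: field_simps power2_eq_square)
  moreover have "(2 * r^2 + 1) / (6 * r) = r/3 + 1 / (6 * r)" using assms by (simp add: field_simps power2_eq_square)
  ultimately show ?thesis by simp
qed

lemma ratio_bound3:
  fixes r :: real assumes "r \<ge> 385/1000"
  shows "1 / (r * (1 + r)) \<le> 18755/10000"
proof -
  have "(385/1000::real) * (1 + 385/1000) \<le> r * (1 + r)"
    using assms by (intro mult_mono) auto
  moreover have "(385/1000::real) * (1 + 385/1000) > 0" by simp
  ultimately have "1 / (r * (1 + r)) \<le> 1 / ((385/1000::real) * (1 + 385/1000))"
    by (intro divide_left_mono) auto
  also have "\<dots> \<le> 18755/10000" by simp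
  finally show ?thesis .
qed


definition fpow :: "real \<Rightarrow> real \<Rightarrow> real \<Rightarrow> real" where
  "fpow \<alpha> c s = (c - s) powr (- \<alpha>) / Gamma (1 - \<alpha>)"

definition fder :: "real \<Rightarrow> real \<Rightarrow> real \<Rightarrow> real" where
  "fder \<alpha> c s = \<alpha> * (c - s) powr (- \<alpha> - 1) / Gamma (1 - \<alpha>)"

definition fder2 :: "real \<Rightarrow> real \<Rightarrow> real \<Rightarrow> real" where
  "fder2 \<alpha> c s = \<alpha> * (\<alpha> + 1) * (c - s) powr (- \<alpha> - 2) / Gamma (1 - \<alpha>)"

lemma varpi_fpow: "varpi \<alpha> t n = fpow \<alpha> (t_shift \<alpha> t n)"
  by (rule ext) (simp add: varpi_def omega_def fpow_def)

lemma powr_deriv_aux: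
  fixes c s e :: real
  assumes "s < c"
  shows "((\<lambda>s. (c - s) powr e) has_real_derivative (- e * (c - s) powr (e - 1))) (at s)"
proof -
  have "((\<lambda>s. (c - s) powr e) has_real_derivative (e * (c - s) powr (e - of_nat 1) * (-1))) (at s)"
    using assms by (intro DERIV_fun_powr) (auto intro!: derivative_eq_intros)
  then show ?thesis by simp
qed

lemma fpow_deriv: "s < c \<Longrightarrow> (fpow \<alpha> c has_real_derivative fder \<alpha> c s) (at s)"
proof -
  assume "s < c"
  from DERIV_cdivide[OF powr_deriv_aux[OF this, of "- \<alpha>"], of "Gamma (1 - \<alpha>)"]
  show ?thesis unfolding fpow_def[abs_def] fder_def by (simp add: algebra_simps)
qed

lemma fder_deriv: "s < c \<Longrightarrow> (fder \<alpha> c has_real_derivative fder2 \<alpha> c s) (at s)"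
proof -
  assume "s < c"
  from DERIV_cmult[OF powr_deriv_aux[OF this, of "- \<alpha> - 1"], of \<alpha>]
  have "((\<lambda>s. \<alpha> * (c - s) powr (- \<alpha> - 1)) has_real_derivative \<alpha> * (\<alpha> + 1) * (c - s) powr (- \<alpha> - 2)) (at s)"
    by (simp add: algebra_simps)
  from DERIV_cdivide[OF this, of "Gamma (1 - \<alpha>)"]
  show ?thesis unfolding fder_def[abs_def] fder2_def by simp
qed

lemma Gamma_pos1: "\<alpha> < 1 \<Longrightarrow> Gamma (1 - \<alpha>) > (0::real)"
  by (intro Gamma_real_pos) simp

lemma fpow_pos: "s < c \<Longrightarrow> \<alpha> < 1 \<Longrightarrow> fpow \<alpha> c s > 0"
  unfolding fpow_def using Gamma_pos1 by simp

lemma fder_pos: "s < c \<Longrightarrow> 0 < \<alpha> \<Longrightarrow> \<alpha> < 1 \<Longrightarrow> fder \<alpha> c s > 0"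
  unfolding fder_def using Gamma_pos1 by simp

lemma fder_mono: assumes "x \<le> y" "y < c" "0 < \<alpha>" "\<alpha> < 1" shows "fder \<alpha> c x \<le> fder \<alpha> c y"
proof -
  have "(c - x) powr (- \<alpha> - 1) \<le> (c - y) powr (- \<alpha> - 1)"
    using assms by (intro powr_mono2') auto
  then show ?thesis unfolding fder_def using assms Gamma_pos1[of \<alpha>]
    by (intro divide_right_mono mult_left_mono) auto
qed

lemma fpow_MV: assumes "a \<le> b" "b < c" "0 < \<alpha>" "\<alpha> < 1" shows "MV (fpow \<alpha> c) (fder \<alpha> c) a b"
  using assms by (intro MV_intro fpow_deriv fder_mono) auto

lemma fpow_diff_pos: assumes "s < c1" "c1 < c2" "0 < \<alpha>" "\<alpha> < 1"
  shows "fpow \<alpha> c1 s - fpow \<alpha> c2 s > 0"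
proof -
  have "(c2 - s) powr (- \<alpha>) < (c1 - s) powr (- \<alpha>)"
    using assms by (intro powr_less_mono2_neg) auto
  then show ?thesis unfolding fpow_def using Gamma_pos1[of \<alpha>] assms
    by (simp add: divide_strict_right_mono)
qed

lemma fder_diff_pos: assumes "s < c1" "c1 < c2" "0 < \<alpha>" "\<alpha> < 1"
  shows "fder \<alpha> c1 s - fder \<alpha> c2 s > 0"
proof -
  have "(c2 - s) powr (- \<alpha> - 1) < (c1 - s) powr (- \<alpha> - 1)"
    using assms by (intro powr_less_mono2_neg) auto
  then have "\<alpha> * (c2 - s) powr (- \<alpha> - 1) < \<alpha> * (c1 - s) powr (- \<alpha> - 1)" using assms by simp
  then show ?thesis unfolding fder_def using Gamma_pos1[of \<alpha>] assms
    by (simp add: divide_strict_right_mono)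
qed

lemma fder2_diff_nonneg: assumes "s < c1" "c1 < c2" "0 < \<alpha>" "\<alpha> < 1"
  shows "fder2 \<alpha> c1 s - fder2 \<alpha> c2 s \<ge> 0"
proof -
  have "(c2 - s) powr (- \<alpha> - 2) \<le> (c1 - s) powr (- \<alpha> - 2)"
    using assms by (intro powr_mono2') auto
  then have "\<alpha> * (\<alpha> + 1) * (c2 - s) powr (- \<alpha> - 2) \<le> \<alpha> * (\<alpha> + 1) * (c1 - s) powr (- \<alpha> - 2)"
    using assms by (intro mult_left_mono) auto
  then show ?thesis unfolding fder2_def using Gamma_pos1[of \<alpha>] assms
    by (simp add: divide_right_mono)
qed

lemma hdiff_MV: assumes "a \<le> b" "b < c1" "c1 < c2" "0 < \<alpha>" "\<alpha> < 1"
  shows "MV (\<lambda>s. fpow \<alpha> c1 s - fpow \<alpha> c2 s) (\<lambda>s. fder \<alpha> c1 s - fder \<alpha> c2 s) a b"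
proof (rule MV_intro)
  show "a \<le> b" by fact
  fix x assume "a \<le> x" "x \<le> b"
  then show "((\<lambda>s. fpow \<alpha> c1 s - fpow \<alpha> c2 s) has_real_derivative fder \<alpha> c1 x - fder \<alpha> c2 x) (at x)"
    using assms by (intro DERIV_diff fpow_deriv) auto
next
  fix x y assume xy: "a \<le> x" "x \<le> y" "y \<le> b"
  show "fder \<alpha> c1 x - fder \<alpha> c2 x \<le> fder \<alpha> c1 y - fder \<alpha> c2 y"
  proof (rule DERIV_nonneg_imp_increasing_open[of x y])
    show "x \<le> y" by fact
    fix z assume "x < z" "z < y"
    then show "\<exists>d. ((\<lambda>s. fder \<alpha> c1 s - fder \<alpha> c2 s) has_real_derivative d) (at z) \<and> d \<ge> 0"
      using assms xy fder2_diff_nonneg[of z c1 c2 \<alpha>]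
      by (intro exI[of _ "fder2 \<alpha> c1 z - fder2 \<alpha> c2 z"]) (auto intro!: DERIV_diff fder_deriv)
  next
    show "continuous_on {x..y} (\<lambda>s. fder \<alpha> c1 s - fder \<alpha> c2 s)"
      using assms xy by (intro continuous_at_imp_continuous_on ballI continuous_intros DERIV_isCont[OF fder_deriv]) auto
  qed
qed


lemma fpow_integral_sing:
  assumes "a < c" "0 < \<alpha>" "\<alpha> < 1"
  shows "(fpow \<alpha> c has_integral ((c - a) powr (1 - \<alpha>) / ((1 - \<alpha>) * Gamma (1 - \<alpha>)))) {a..c}"
proof -
  define G where "G = (\<lambda>s. - ((c - s) powr (1 - \<alpha>)) / ((1 - \<alpha>) * Gamma (1 - \<alpha>)))"
  have gp: "Gamma (1 - \<alpha>) > 0" using assms by (intro Gamma_pos1) auto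
  have nz3: "Gamma (1 - \<alpha>) \<noteq> 0" using gp by linarith
  have nz: "(1 - \<alpha>) * Gamma (1 - \<alpha>) \<noteq> 0" "1 - \<alpha> > 0" "Gamma (1 - \<alpha>) \<noteq> 0" using nz3 assms by auto
  have "(fpow \<alpha> c has_integral (G c - G a)) {a..c}"
  proof (rule fundamental_theorem_of_calculus_interior)
    show "a \<le> c" using assms by simp
    show "continuous_on {a..c} G" unfolding G_def
      by (intro continuous_intros continuous_on_powr') (use assms nz in auto)
  next
    fix x assume x: "x \<in> {a<..<c}"
    have "(G has_real_derivative (- (- (1 - \<alpha>) * (c - x) powr (1 - \<alpha> - 1))) / ((1 - \<alpha>) * Gamma (1 - \<alpha>))) (at x)"
      unfolding G_def using x by (intro DERIV_cdivide DERIV_minus powr_deriv_aux) auto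
    moreover have "(- (- (1 - \<alpha>) * (c - x) powr (1 - \<alpha> - 1))) / ((1 - \<alpha>) * Gamma (1 - \<alpha>)) = fpow \<alpha> c x"
      unfolding fpow_def using assms nz by (simp add: field_simps)
    ultimately show "(G has_vector_derivative fpow \<alpha> c x) (at x)"
      by (simp add: has_real_derivative_iff_has_vector_derivative)
  qed
  moreover have "G c - G a = (c - a) powr (1 - \<alpha>) / ((1 - \<alpha>) * Gamma (1 - \<alpha>))"
    unfolding G_def by simp
  ultimately show ?thesis by simp
qed

lemma aux_ak: fixes P G L a :: real
  assumes "a \<noteq> 2" "a \<noteq> 1" "G \<noteq> 0" "L \<noteq> 0"
  shows "(2 * (1 - a) / (2 - a)) * ((1 / (2 * L / (2 - a))) * ((L * P) / ((1 - a) * G))) = P / G"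
proof -
  have h: "2 - a \<noteq> 0" "1 - a \<noteq> 0" using assms by auto
  have d: "(2 - a) * (2 * L) * ((1 - a) * G) \<noteq> 0" using h assms by simp
  have "(2 * (1 - a) / (2 - a)) * ((1 / (2 * L / (2 - a))) * ((L * P) / ((1 - a) * G)))
      = ((2 * (1 - a)) * (2 - a) * (L * P)) / ((2 - a) * (2 * L) * ((1 - a) * G))"
    by (simp add: divide_simps)
  also have "\<dots> = P / G"
    by (subst frac_eq_eq[OF d assms(3)]) (simp add: algebra_simps)
  finally show ?thesis .
qed

lemma akern0_closed:
  assumes n: "1 \<le> n" and tt: "t (n - 1) < t n" and al: "0 < \<alpha>" "\<alpha> < 1"
  shows "(2 * (1 - \<alpha>) / (2 - \<alpha>)) * akern \<alpha> t n 0 = fpow \<alpha> (t_shift \<alpha> t n) (t (n - 1))"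
proof -
  define c where "c = t_shift \<alpha> t n"
  define a where "a = t (n - 1)"
  define \<tau> where "\<tau> = tau t n"
  have tau: "\<tau> = t n - a" "\<tau> > 0" using tt by (auto simp: \<tau>_def tau_def a_def)
  have ca: "c - a = (1 - \<alpha>/2) * \<tau>" unfolding c_def t_shift_def tau a_def by (simp add: algebra_simps)
  have "(1 - \<alpha>/2) * \<tau> > 0" using tau al by (intro mult_pos_pos) auto
  then have ac: "a < c" using ca by simp
  have "\<alpha> * \<tau> / 2 \<ge> 0" using tau al by simp
  moreover have "c = a + \<tau> - \<alpha> * \<tau> / 2" using ca by (simp add: algebra_simps)
  ultimately have "c \<le> t n" using tau(1) by linarith
  then have mn: "min (t n) c = c" by simp
  have g: "Gamma (1 - \<alpha>) > 0" using al by (intro Gamma_pos1) auto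
  have I: "integral {a..c} (varpi \<alpha> t n) = (c - a) powr (1 - \<alpha>) / ((1 - \<alpha>) * Gamma (1 - \<alpha>))"
    unfolding varpi_fpow c_def[symmetric] using fpow_integral_sing[OF ac al] by (rule integral_unique)
  have ak: "akern \<alpha> t n 0 = (1 / \<tau>) * ((c - a) powr (1 - \<alpha>) / ((1 - \<alpha>) * Gamma (1 - \<alpha>)))"
    unfolding akern_def Let_def using mn I by (simp add: c_def a_def \<tau>_def)
  define L where "L = c - a"
  have L: "L > 0" using ac by (simp add: L_def)
  have tauL: "\<tau> = 2 * L / (2 - \<alpha>)" using ca al by (simp add: L_def field_simps)
  have pw: "L powr (1 - \<alpha>) = L * L powr (- \<alpha>)"
  proof -
    have "L powr (1 - \<alpha>) = L powr (1 + (- \<alpha>))" by simp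
    also have "\<dots> = L powr 1 * L powr (- \<alpha>)" by (rule powr_add)
    finally show ?thesis using L by simp
  qed
  have "(2 * (1 - \<alpha>) / (2 - \<alpha>)) * akern \<alpha> t n 0 = L powr (- \<alpha>) / Gamma (1 - \<alpha>)"
  proof -
    have nz0: "Gamma (1 - \<alpha>) \<noteq> 0" using g by linarith
    have nz: "2 - \<alpha> \<noteq> 0" "1 - \<alpha> \<noteq> 0" "Gamma (1 - \<alpha>) \<noteq> 0" "L \<noteq> 0" using al nz0 L by auto
    show ?thesis unfolding ak L_def[symmetric] pw tauL using aux_ak[of \<alpha> "Gamma (1 - \<alpha>)" L "L powr (- \<alpha>)"] nz by simp
  qed
  then show ?thesis unfolding fpow_def c_def[symmetric] a_def[symmetric] L_def .
qed


definition Kint :: "(nat \<Rightarrow> real) \<Rightarrow> (real \<Rightarrow> real) \<Rightarrow> nat \<Rightarrow> real" where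
  "Kint t \<phi> k = Av \<phi> (t (k-1)) (t k) + Zt \<phi> (t (k-2)) (t (k-1)) / (ratio t k * (1 + ratio t k))
      - Zt \<phi> (t (k-1)) (t k) / (1 + ratio t (k+1))"

definition Kedge :: "(nat \<Rightarrow> real) \<Rightarrow> (real \<Rightarrow> real) \<Rightarrow> real" where
  "Kedge t \<phi> = Av \<phi> (t 0) (t 1) - Zt \<phi> (t 0) (t 1) / (1 + ratio t 2)"

lemma ratio_eq: "2 \<le> k \<Longrightarrow> ratio t k = (t k - t (k-1)) / (t (k-1) - t (k-2))"
proof -
  assume "2 \<le> k"
  then have "k - 1 - 1 = k - 2" by arith
  then show ?thesis unfolding ratio_def tau_def by simp
qed

lemma ratio_pos: "2 \<le> k \<Longrightarrow> t (k-2) < t (k-1) \<Longrightarrow> t (k-1) < t k \<Longrightarrow> ratio t k > 0"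
  by (simp add: ratio_eq)

lemma Kint_pos:
  assumes k: "2 \<le> k" and mv: "MV \<phi> \<phi>' (t (k-2)) (t k)"
    and tt: "t (k-2) < t (k-1)" "t (k-1) < t k" and r: "ratio t (k+1) > 0"
    and p: "\<phi> (t (k-1)) > 0" "\<phi>' (t (k-2)) \<ge> 0"
  shows "Kint t \<phi> k > 0"
proof -
  have mv1: "MV \<phi> \<phi>' (t (k-2)) (t (k-1))" using MV_sub[OF mv order_refl] tt by auto
  have mv2: "MV \<phi> \<phi>' (t (k-1)) (t k)" using MV_sub[OF mv _ order_refl] tt by auto
  have d: "\<phi>' (t (k-1)) \<ge> 0" using MV_dmono[OF mv order_refl, of "t (k-1)"] tt p by auto
  have z: "Zt \<phi> (t (k-2)) (t (k-1)) \<ge> 0" using Zt_nonneg[OF mv1 tt(1) p(2)] .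
  have rk: "ratio t k * (1 + ratio t k) > 0" using ratio_pos[OF k tt] by simp
  have "Zt \<phi> (t (k-2)) (t (k-1)) / (ratio t k * (1 + ratio t k)) \<ge> 0" using z rk by simp
  moreover have "Av \<phi> (t (k-1)) (t k) - Zt \<phi> (t (k-1)) (t k) / (1 + ratio t (k+1)) > 0"
    using pos_AZ[OF mv2 tt(2) p(1) d r] .
  ultimately show ?thesis unfolding Kint_def by linarith
qed

lemma Kedge_pos:
  assumes mv: "MV \<phi> \<phi>' (t 0) (t 1)" and tt: "t 0 < t 1" and r: "ratio t 2 > 0"
    and p: "\<phi> (t 0) > 0" "\<phi>' (t 0) \<ge> 0"
  shows "Kedge t \<phi> > 0"
  unfolding Kedge_def using pos_AZ[OF mv tt p r] .

lemma Kmono_int: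
  assumes k: "2 \<le> k" and mv: "MV \<phi> \<phi>' (t (k-2)) (t (k+1))"
    and tt: "t (k-2) < t (k-1)" "t (k-1) < t k" "t k < t (k+1)"
    and r: "ratio t k \<ge> 385/1000" "ratio t (k+2) \<ge> 0"
    and d: "\<phi>' (t (k-1)) > 0"
  shows "Kint t \<phi> (k+1) - Kint t \<phi> k > 0"
proof -
  define x0 x1 x2 x3 where "x0 = t (k-2)" "x1 = t (k-1)" "x2 = t k" "x3 = t (k+1)"
  define p where "p = 1 / (1 + ratio t (k+2))"
  have p: "0 \<le> p" "p \<le> 1" using r by (auto simp: p_def)
  define r' where "r' = ratio t (k+1)"
  have r'e: "r' = (x3 - x2) / (x2 - x1)" using ratio_eq[of "k+1" t] k by (simp add: r'_def x0_x1_x2_x3_def)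
  define r where "r = ratio t k"
  have re: "r = (x2 - x1) / (x1 - x0)" using ratio_eq[of k t] k by (simp add: r_def x0_x1_x2_x3_def)
  have x: "x0 < x1" "x1 < x2" "x2 < x3" using tt by (auto simp: x0_x1_x2_x3_def)
  have mv13: "MV \<phi> \<phi>' x1 x3" using MV_sub[OF mv] x by (auto simp: x0_x1_x2_x3_def)
  have mv01: "MV \<phi> \<phi>' x0 x1" using MV_sub[OF mv] x by (auto simp: x0_x1_x2_x3_def)
  have d': "\<phi>' x1 > 0" using d by (simp add: x0_x1_x2_x3_def)
  have core: "(Av \<phi> x2 x3 + Zt \<phi> x1 x2 / (r' * (1 + r')) - p * Zt \<phi> x2 x3) - (Av \<phi> x1 x2 - Zt \<phi> x1 x2 / (1 + r'))
      \<ge> \<phi>' x1 * (x2 - x1) * (1/2 + r'/3 + 1 / (6 * r'))"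
    using core_mono[OF mv13 x(2) x(3) _ p r'e] d' by simp
  have zl: "Zt \<phi> x0 x1 / (r * (1 + r)) \<le> \<phi>' x1 * (x2 - x1) / (6 * r^2 * (1 + r))"
    using Z_left[OF mv01 x(1) x(2) re] .
  define P where "P = \<phi>' x1 * (x2 - x1)"
  have P: "P > 0" using d' x by (simp add: P_def)
  have rp': "r' > 0" using r'e x by simp
  have b2: "r'/3 + 1 / (6 * r') \<ge> 466/1000" using ratio_bound2[OF rp'] .
  have b1: "1 / (6 * r^2 * (1 + r)) \<le> 8122/10000" using ratio_bound1 r by (simp add: r_def)
  have "P * (1/2 + r'/3 + 1 / (6 * r')) \<ge> P * (966/1000)" using b2 P by (intro mult_left_mono) auto
  moreover have "P * (1 / (6 * r^2 * (1 + r))) \<le> P * (8122/10000)" using b1 P by (intro mult_left_mono) auto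
  moreover have "\<phi>' x1 * (x2 - x1) / (6 * r^2 * (1 + r)) = P * (1 / (6 * r^2 * (1 + r)))" by (simp add: P_def)
  moreover have "Kint t \<phi> (k+1) - Kint t \<phi> k =
     (Av \<phi> x2 x3 + Zt \<phi> x1 x2 / (r' * (1 + r')) - p * Zt \<phi> x2 x3) - (Av \<phi> x1 x2 - Zt \<phi> x1 x2 / (1 + r'))
      - Zt \<phi> x0 x1 / (r * (1 + r))"
    unfolding Kint_def p_def r_def r'_def x0_x1_x2_x3_def using k
    by (simp add: numeral_2_eq_2 Suc_diff_Suc algebra_simps)
  ultimately show ?thesis using core zl P unfolding P_def[symmetric] by linarith
qed


lemma Kmono_edge:
  assumes mv: "MV \<phi> \<phi>' (t 0) (t 2)"
    and tt: "t 0 < t 1" "t 1 < t 2" and r: "ratio t 3 \<ge> 0"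
    and d: "\<phi>' (t 0) > 0"
  shows "Kint t \<phi> 2 - Kedge t \<phi> > 0"
proof -
  define p where "p = 1 / (1 + ratio t 3)"
  have p: "0 \<le> p" "p \<le> 1" using r by (auto simp: p_def)
  have r'e: "ratio t 2 = (t 2 - t 1) / (t 1 - t 0)" using ratio_eq[of 2 t] by simp
  have core: "(Av \<phi> (t 1) (t 2) + Zt \<phi> (t 0) (t 1) / (ratio t 2 * (1 + ratio t 2)) - p * Zt \<phi> (t 1) (t 2))
       - (Av \<phi> (t 0) (t 1) - Zt \<phi> (t 0) (t 1) / (1 + ratio t 2))
      \<ge> \<phi>' (t 0) * (t 1 - t 0) * (1/2 + ratio t 2/3 + 1 / (6 * ratio t 2))"
    using core_mono[OF mv tt _ p r'e] d by simp
  have rp: "ratio t 2 > 0" using r'e tt by simp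
  have "ratio t 2/3 > 0" "1 / (6 * ratio t 2) > 0" using rp by auto
  then have "1/2 + ratio t 2/3 + 1 / (6 * ratio t 2) > 0" by linarith
  moreover have "\<phi>' (t 0) * (t 1 - t 0) > 0" using d tt by simp
  ultimately have "\<phi>' (t 0) * (t 1 - t 0) * (1/2 + ratio t 2/3 + 1 / (6 * ratio t 2)) > 0" by simp
  moreover have "Kint t \<phi> 2 - Kedge t \<phi> = (Av \<phi> (t 1) (t 2) + Zt \<phi> (t 0) (t 1) / (ratio t 2 * (1 + ratio t 2)) - p * Zt \<phi> (t 1) (t 2))
       - (Av \<phi> (t 0) (t 1) - Zt \<phi> (t 0) (t 1) / (1 + ratio t 2))"
    unfolding Kint_def Kedge_def p_def by simp
  ultimately show ?thesis using core by linarith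
qed

lemma Kint_diff:
  assumes k: "2 \<le> k" and tt: "t (k-2) \<le> t (k-1)" "t (k-1) \<le> t k"
    and cf: "continuous_on {t (k-2)..t k} f" and cg: "continuous_on {t (k-2)..t k} g"
  shows "Kint t (\<lambda>s. f s - g s) k = Kint t f k - Kint t g k"
proof -
  have s1: "{t (k-2)..t (k-1)} \<subseteq> {t (k-2)..t k}" "{t (k-1)..t k} \<subseteq> {t (k-2)..t k}" using tt by auto
  have i1: "f integrable_on {t (k-1)..t k}" "g integrable_on {t (k-1)..t k}"
    using cf cg s1 by (auto intro!: integrable_continuous_interval intro: continuous_on_subset)
  have i2: "(\<lambda>s. (s - (t (k-1) + t k)/2) * f s) integrable_on {t (k-1)..t k}"
           "(\<lambda>s. (s - (t (k-1) + t k)/2) * g s) integrable_on {t (k-1)..t k}"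
    using cf cg s1 by (auto intro!: integrable_continuous_interval continuous_intros intro: continuous_on_subset)
  have i3: "(\<lambda>s. (s - (t (k-2) + t (k-1))/2) * f s) integrable_on {t (k-2)..t (k-1)}"
           "(\<lambda>s. (s - (t (k-2) + t (k-1))/2) * g s) integrable_on {t (k-2)..t (k-1)}"
    using cf cg s1 by (auto intro!: integrable_continuous_interval continuous_intros intro: continuous_on_subset)
  show ?thesis unfolding Kint_def Av_diff[OF i1] Zt_diff[OF i2] Zt_diff[OF i3]
    by (simp add: diff_divide_distrib algebra_simps)
qed

lemma Kedge_diff:
  assumes tt: "t 0 \<le> t 1"
    and cf: "continuous_on {t 0..t 1} f" and cg: "continuous_on {t 0..t 1} g"
  shows "Kedge t (\<lambda>s. f s - g s) = Kedge t f - Kedge t g"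
proof -
  have i1: "f integrable_on {t 0..t 1}" "g integrable_on {t 0..t 1}"
    using cf cg by (auto intro!: integrable_continuous_interval)
  have i2: "(\<lambda>s. (s - (t 0 + t 1)/2) * f s) integrable_on {t 0..t 1}"
           "(\<lambda>s. (s - (t 0 + t 1)/2) * g s) integrable_on {t 0..t 1}"
    using cf cg by (auto intro!: integrable_continuous_interval continuous_intros)
  show ?thesis unfolding Kedge_def Av_diff[OF i1] Zt_diff[OF i2]
    by (simp add: diff_divide_distrib algebra_simps)
qed

lemma tshift_gt: "t (n-1) < t n \<Longrightarrow> 0 < \<alpha> \<Longrightarrow> \<alpha> < 1 \<Longrightarrow> t (n-1) < t_shift \<alpha> t n"
proof -
  assume a: "t (n-1) < t n" "0 < \<alpha>" "\<alpha> < 1"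
  have "t_shift \<alpha> t n - t (n-1) = (1 - \<alpha>/2) * (t n - t (n-1))" by (simp add: t_shift_def algebra_simps)
  moreover have "(1 - \<alpha>/2) * (t n - t (n-1)) > 0" using a by (intro mult_pos_pos) auto
  ultimately show ?thesis by linarith
qed

lemma tshift_lt: "t (n-1) < t n \<Longrightarrow> 0 < \<alpha> \<Longrightarrow> \<alpha> < 1 \<Longrightarrow> t_shift \<alpha> t n < t n"
proof -
  assume a: "t (n-1) < t n" "0 < \<alpha>" "\<alpha> < 1"
  have "t n - t_shift \<alpha> t n = (\<alpha>/2) * (t n - t (n-1))" by (simp add: t_shift_def algebra_simps)
  moreover have "(\<alpha>/2) * (t n - t (n-1)) > 0" using a by (intro mult_pos_pos) auto
  ultimately show ?thesis by linarith
qed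

lemma akern_Av:
  assumes "1 \<le> k" "k < n" "t k \<le> t (n-1)" "t (n-1) < t n" "0 < \<alpha>" "\<alpha> < 1"
  shows "akern \<alpha> t n (n-k) = Av (varpi \<alpha> t n) (t (k-1)) (t k)"
proof -
  have "t k < t_shift \<alpha> t n" using tshift_gt[of t n \<alpha>] assms by linarith
  then have m: "min (t k) (t_shift \<alpha> t n) = t k" by simp
  have nk: "n - (n - k) = k" using assms by simp
  show ?thesis unfolding akern_def Let_def nk m Av_def tau_def by simp
qed

lemma zeta_Zt: "k \<le> n \<Longrightarrow> zeta \<alpha> t n (n-k) = Zt (varpi \<alpha> t n) (t (k-1)) (t k)"
  unfolding zeta_def Let_def Zt_def tau_def by simp

lemma Akern_int:
  assumes k: "2 \<le> k" "k < n" and tt: "t k \<le> t (n-1)" "t (n-1) < t n" and al: "0 < \<alpha>" "\<alpha> < 1"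
  shows "Akern \<alpha> t n (n-k) = Kint t (varpi \<alpha> t n) k"
proof -
  have j0: "n - k \<noteq> 0" "n - k \<noteq> n - 1" using k by auto
  have nk: "n - (n - k) = k" using k by simp
  have j1: "n - k + 1 = n - (k - 1)" using k by simp
  have a: "akern \<alpha> t n (n-k) = Av (varpi \<alpha> t n) (t (k-1)) (t k)"
    using akern_Av[of k n t \<alpha>] k tt al by simp
  have z1: "zeta \<alpha> t n (n - (k-1)) = Zt (varpi \<alpha> t n) (t (k-2)) (t (k-1))"
    using zeta_Zt[of "k-1" n \<alpha> t] k by (simp add: numeral_2_eq_2)
  have z2: "zeta \<alpha> t n (n - k) = Zt (varpi \<alpha> t n) (t (k-1)) (t k)"
    using zeta_Zt[of k n \<alpha> t] k by simp
  show ?thesis unfolding Akern_def ahat_def Let_def Kint_def using j0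
    by (simp only: if_False nk j1 a z1 z2) (simp add: divide_inverse algebra_simps)
qed

lemma Akern_edge:
  assumes n: "2 \<le> n" and tt: "t 1 \<le> t (n-1)" "t (n-1) < t n" and al: "0 < \<alpha>" "\<alpha> < 1"
  shows "Akern \<alpha> t n (n-1) = Kedge t (varpi \<alpha> t n)"
proof -
  have j0: "n - 1 \<noteq> 0" using n by auto
  have a: "akern \<alpha> t n (n-1) = Av (varpi \<alpha> t n) (t 0) (t 1)"
    using akern_Av[of 1 n t \<alpha>] n tt al by simp
  have z: "zeta \<alpha> t n (n - 1) = Zt (varpi \<alpha> t n) (t 0) (t 1)"
    using zeta_Zt[of 1 n \<alpha> t] n by simp
  show ?thesis unfolding Akern_def ahat_def Kedge_def using j0
    by (simp only: if_False if_True a z) (simp add: divide_inverse algebra_simps)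
qed

lemma Akern_top:
  assumes n: "2 \<le> n" and tt: "t (n-1) < t n" and al: "0 < \<alpha>" "\<alpha> < 1"
  shows "Akern \<alpha> t n 0 = 2 * fpow \<alpha> (t_shift \<alpha> t n) (t (n-1))
      + 2 * (Zt (varpi \<alpha> t n) (t (n-2)) (t (n-1)) / (ratio t n * (1 + ratio t n)))"
proof -
  have c: "(2 * (1 - \<alpha>) / (2 - \<alpha>)) * akern \<alpha> t n 0 = fpow \<alpha> (t_shift \<alpha> t n) (t (n-1))"
    using akern0_closed[of n t \<alpha>] n tt al by simp
  have z: "zeta \<alpha> t n 1 = Zt (varpi \<alpha> t n) (t (n-2)) (t (n-1))"
    using zeta_Zt[of "n-1" n \<alpha> t] n by (simp add: numeral_2_eq_2)
  have n1: "n \<noteq> 1" using n by simp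
  show ?thesis unfolding Akern_def ahat_def using n1
    by (simp only: if_False if_True c z) (simp add: divide_inverse algebra_simps)
qed

lemma Akern_top1:
  assumes tt: "t 0 < t 1" and al: "0 < \<alpha>" "\<alpha> < 1"
  shows "Akern \<alpha> t 1 0 = 2 * fpow \<alpha> (t_shift \<alpha> t 1) (t 0)"
proof -
  have c: "(2 * (1 - \<alpha>) / (2 - \<alpha>)) * akern \<alpha> t 1 0 = fpow \<alpha> (t_shift \<alpha> t 1) (t 0)"
    using akern0_closed[of 1 t \<alpha>] tt al by simp
  show ?thesis unfolding Akern_def ahat_def using c by simp
qed


lemma rho_powr_bound:
  fixes \<rho> a :: real
  assumes "\<rho> \<ge> 385/1000" "0 < a" "a < 1"
  shows "\<rho> powr (- a) \<le> 26/10"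
proof (cases "\<rho> \<ge> 1")
  case True
  have "\<rho> powr (- a) \<le> \<rho> powr 0" using powr_mono[of "- a" 0 \<rho>] True assms by linarith
  then show ?thesis using True by simp
next
  case False
  have rp: "\<rho> > 0" using assms by linarith
  have "\<rho> powr (- a) = (1/\<rho>) powr a" using rp by (simp add: powr_minus powr_divide inverse_eq_divide)
  also have "\<dots> \<le> (1/\<rho>) powr 1"
  proof (rule powr_mono)
    show "a \<le> 1" using assms by simp
    show "1 \<le> 1/\<rho>" using False rp by (simp add: le_divide_eq_1_pos)
  qed
  also have "\<dots> = 1/\<rho>" using rp by simp
  also have "\<dots> \<le> 1 / (385/1000)" using divide_left_mono[of "385/1000" \<rho> 1] assms rp by simp
  also have "\<dots> \<le> 26/10" by simp
  finally show ?thesis .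
qed
lemma young1:
  fixes x a :: real
  assumes "x > 0" "0 \<le> a" "a \<le> 1"
  shows "x powr a \<le> 1 + a * (x - 1)"
proof -
  have "x powr a * 1 powr (1 - a) \<le> a * x + (1 - a) * 1"
    using assms by (intro Youngs_inequality_0) auto
  then show ?thesis by (simp add: algebra_simps)
qed

lemma poly_ineq:
  fixes a :: real
  assumes "0 < a" "a < 1"
  shows "(2 - a) / (2 + a) - a * ((615/1000 * (1 - a/2) - 1/2) / (1/2 + 385/1000 * (1 - a/2))) / 2 - 2/5 * a > 0"
proof -
  define D where "D = 1/2 + 385/1000 * (1 - a/2)"
  define N where "N = 615/1000 * (1 - a/2) - 1/2"
  have "385/1000 * (1 - a/2) > 0" using assms by simp
  then have D: "D > 0" unfolding D_def by argo
  have a2: "a^2 \<le> 1" using assms by (simp add: power_le_one)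
  define q where "q = 4186/1000 - 485/1000 * (1 + a) - 4615/10000 * (1 + a + a^2)"
  have q: "q > 0" unfolding q_def using assms a2 by argo
  have pe: "2 * D * (2 - a) - a * (2 + a) * N - 4/5 * a * D * (2 + a) = 3005/10000 + (1 - a) * q"
    unfolding D_def N_def q_def by (simp add: field_simps power2_eq_square)
  have pp: "2 * D * (2 - a) - a * (2 + a) * N - 4/5 * a * D * (2 + a) > 0"
    unfolding pe using q assms by (simp add: add_pos_nonneg)
  have nz: "2 + a \<noteq> 0" "D \<noteq> 0" using D assms by auto
  define K where "K = 2 * D * (2 + a)"
  have K: "K > 0" unfolding K_def using D assms by simp
  have e1: "(2 - a) / (2 + a) * K = 2 * D * (2 - a)" unfolding K_def using nz by (simp add: field_simps)
  have e2: "a * (N / D) / 2 * K = a * (2 + a) * N" unfolding K_def using nz by (simp add: field_simps)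
  have e3: "2/5 * a * K = 4/5 * a * D * (2 + a)" unfolding K_def by (simp add: field_simps)
  have "((2 - a) / (2 + a) - a * (N / D) / 2 - 2/5 * a) * K
      = 2 * D * (2 - a) - a * (2 + a) * N - 4/5 * a * D * (2 + a)"
    using e1 e2 e3 by (simp add: left_diff_distrib)
  then have "((2 - a) / (2 + a) - a * (N / D) / 2 - 2/5 * a) * K > 0" using pp by simp
  then have ee: "(2 - a) / (2 + a) - a * (N / D) / 2 - 2/5 * a > 0" using K by (simp add: zero_less_mult_iff)
  then show ?thesis using ee unfolding D_def N_def by simp
qed

lemma powr_rel:
  fixes u u1 a :: real
  assumes "u > 0" "u1 > 0"
  shows "u powr (- a) = u1 powr (- a) * (u1 / u) powr a"
proof -
  have nz: "u1 powr a \<noteq> 0" "u powr a \<noteq> 0" using assms by auto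
  have "u1 powr (- a) * (u1 / u) powr a = inverse (u1 powr a) * (u1 powr a / u powr a)"
    using assms by (simp add: powr_minus powr_divide)
  also have "\<dots> = inverse (u powr a)" using nz by (simp add: divide_inverse)
  also have "\<dots> = u powr (- a)" by (simp add: powr_minus)
  finally show ?thesis by simp
qed

lemma s3_scalar:
  fixes a \<rho> :: real
  assumes a: "0 < a" "a < 1" and r: "\<rho> \<ge> 385/1000"
  shows "3/4 * (1 - a/2) powr (- a) + (1 + (1 - a/2) * \<rho>) powr (- a)
     - (1/2 + (1 - a/2) * \<rho>) powr (- a) / 2 - ((1 - a/2) * \<rho>) powr (- a) / 4 > 0"
proof -
  define u1 where "u1 = 1 - a/2"
  have u1: "u1 > 0" "u1 \<le> 1" using a by (auto simp: u1_def)
  have rp: "\<rho> > 0" using r by linarith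
  have p2: "1 + u1 * \<rho> > 0" "1/2 + u1 * \<rho> > 0" "u1 * \<rho> > 0" using u1 rp by (auto intro!: add_pos_pos)
  define A where "A = u1 / (1 + u1 * \<rho>)"
  define B where "B = u1 / (1/2 + u1 * \<rho>)"
  have A: "A > 0" using u1 p2 by (simp add: A_def)
  have Bp: "B > 0" using u1 p2 by (simp add: B_def)
  have e3: "u1 / (u1 * \<rho>) = 1 / \<rho>" using u1 by simp
  define S where "S = 3/4 + A powr a - B powr a / 2 - (1/\<rho>) powr a / 4"
  have S: "S > 0"
  proof (cases "\<rho> \<ge> 1")
    case True
    have "(1/\<rho>) powr a \<le> 1" using True a by (intro powr_le1) auto
    moreover have "B \<le> 1"
    proof -
      have "u1 * 1 \<le> u1 * \<rho>" using True u1 by (intro mult_left_mono) auto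
      then have "u1 \<le> 1/2 + u1 * \<rho>" by simp
      then show ?thesis unfolding B_def using p2 by (simp add: divide_le_eq_1_pos)
    qed
    then have "B powr a \<le> 1" using Bp a by (intro powr_le1) auto
    moreover have "A powr a > 0" using A by simp
    ultimately show ?thesis unfolding S_def by argo
  next
    case False
    have y1: "(1/\<rho>) powr a \<le> 1 + a * (1/\<rho> - 1)" using young1[of "1/\<rho>" a] rp a by simp
    have "1/\<rho> \<le> 1 / (385/1000)" using divide_left_mono[of "385/1000" \<rho> 1] r rp by simp
    then have "1/\<rho> - 1 \<le> 8/5" by simp
    then have "a * (1/\<rho> - 1) \<le> a * (8/5)" using a by (intro mult_left_mono) auto
    with y1 have R: "(1/\<rho>) powr a \<le> 1 + 8/5 * a" by argo
    have yB: "B powr a \<le> 1 + a * (B - 1)" using young1[of B a] Bp a by simp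
    define B0 where "B0 = u1 / (1/2 + u1 * (385/1000))"
    have "1/2 + u1 * (385/1000) \<le> 1/2 + u1 * \<rho>" using r u1 by simp
    then have "B \<le> B0" unfolding B_def B0_def using u1 p2
      by (intro divide_left_mono) (auto intro!: mult_pos_pos add_pos_pos)
    then have "a * (B - 1) \<le> a * (B0 - 1)" using a by (intro mult_left_mono) auto
    with yB have Bb: "B powr a \<le> 1 + a * (B0 - 1)" by argo
    have yA: "(1/A) powr a \<le> 1 + a * (1/A - 1)" using young1[of "1/A" a] A a by simp
    have "1/A - 1 = (1 + u1 * \<rho> - u1) / u1" unfolding A_def using u1 p2 by (simp add: field_simps)
    also have "\<dots> \<le> 1 / u1"
    proof -
      have "u1 * \<rho> \<le> u1" using False u1 by (simp add: mult_left_le)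
      then show ?thesis using u1 by (intro divide_right_mono) auto
    qed
    finally have "a * (1/A - 1) \<le> a * (1/u1)" using a by (intro mult_left_mono) auto
    with yA have "(1/A) powr a \<le> 1 + a / u1" by argo
    moreover have "(1/A) powr a = 1 / A powr a" using A by (simp add: powr_divide)
    ultimately have "1 / A powr a \<le> 1 + a / u1" by simp
    moreover have "A powr a > 0" using A by simp
    ultimately have "inverse (1 + a / u1) \<le> inverse (1 / A powr a)"
      by (intro le_imp_inverse_le) auto
    then have "A powr a \<ge> 1 / (1 + a / u1)" by (simp add: inverse_eq_divide)
    moreover have "1 / (1 + a / u1) = (2 - a) / (2 + a)" unfolding u1_def using a by (simp add: field_simps)
    ultimately have Ab: "A powr a \<ge> (2 - a) / (2 + a)" by simp
    have P: "(2 - a) / (2 + a) - a * ((615/1000 * (1 - a/2) - 1/2) / (1/2 + 385/1000 * (1 - a/2))) / 2 - 2/5 * a > 0"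
      using poly_ineq[OF a] .
    have "B0 - 1 = (615/1000 * (1 - a/2) - 1/2) / (1/2 + 385/1000 * (1 - a/2))"
      unfolding B0_def u1_def using p2 u1 unfolding u1_def by (simp add: field_simps)
    then have P': "(2 - a) / (2 + a) - a * (B0 - 1) / 2 - 2/5 * a > 0" using P by simp
    show ?thesis unfolding S_def using R Bb Ab P' by argo
  qed
  have "u1 powr (- a) > 0" using u1 by simp
  then have pos: "u1 powr (- a) * S > 0" using S by simp
  have E: "3/4 * u1 powr (- a) + (1 + u1 * \<rho>) powr (- a) - (1/2 + u1 * \<rho>) powr (- a) / 2 - (u1 * \<rho>) powr (- a) / 4
      = u1 powr (- a) * S"
    unfolding S_def powr_rel[OF p2(1) u1(1), of a] powr_rel[OF p2(2) u1(1), of a] powr_rel[OF p2(3) u1(1), of a]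
      e3 A_def[symmetric] B_def[symmetric] by (simp add: algebra_simps)
  show ?thesis using pos E unfolding u1_def by simp
qed


lemma Zt_le_Av:
  assumes ab: "a < b" and c: "continuous_on {a..b} \<phi>" and nn: "\<And>s. s \<in> {a..b} \<Longrightarrow> \<phi> s \<ge> 0"
  shows "Zt \<phi> a b \<le> Av \<phi> a b"
proof -
  define L where "L = b - a"
  have L: "L > 0" using ab by (simp add: L_def)
  have i1: "(\<lambda>s. (s - (a+b)/2) * \<phi> s) integrable_on {a..b}" using c by (intro integrable_continuous_interval continuous_intros)
  have i2: "(\<lambda>s. L/2 * \<phi> s) integrable_on {a..b}" using c by (intro integrable_continuous_interval continuous_intros)
  have "integral {a..b} (\<lambda>s. (s - (a+b)/2) * \<phi> s) \<le> integral {a..b} (\<lambda>s. L/2 * \<phi> s)"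
  proof (rule integral_le[OF i1 i2])
    fix s assume s: "s \<in> {a..b}"
    have "s - (a+b)/2 \<le> L/2" using s by (auto simp: L_def field_simps)
    then show "(s - (a+b)/2) * \<phi> s \<le> L/2 * \<phi> s" using nn[OF s] by (intro mult_right_mono) auto
  qed
  also have "\<dots> = L/2 * integral {a..b} \<phi>" by simp
  finally have I: "integral {a..b} (\<lambda>s. (s - (a+b)/2) * \<phi> s) \<le> L/2 * integral {a..b} \<phi>" .
  have "Zt \<phi> a b \<le> 2 / L^2 * (L/2 * integral {a..b} \<phi>)"
    unfolding Zt_def L_def[symmetric] using I L by (intro mult_left_mono) auto
  also have "\<dots> = Av \<phi> a b" unfolding Av_def L_def[symmetric] using L by (simp add: power2_eq_square field_simps)
  finally show ?thesis .
qed

lemma S1_int: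
  assumes mv: "MV \<phi> \<phi>' x0 x2" and x: "x0 < x1" "x1 < x2" and r: "r = (x2 - x1) / (x1 - x0)" "r \<ge> 385/1000"
    and p: "\<phi> x1 > 0" "\<phi>' x0 \<ge> 0" and rho: "\<rho> > 0"
  shows "2 * \<phi> x2 + 2 * (Zt \<phi> x1 x2 / (\<rho> * (1 + \<rho>)))
     - (Av \<phi> x1 x2 + Zt \<phi> x0 x1 / (r * (1 + r)) - Zt \<phi> x1 x2 / (1 + \<rho>)) > 0"
proof -
  have mv01: "MV \<phi> \<phi>' x0 x1" using MV_sub[OF mv order_refl] x by auto
  have mv12: "MV \<phi> \<phi>' x1 x2" using MV_sub[OF mv _ order_refl] x by auto
  have d1: "\<phi>' x1 \<ge> 0" using MV_dmono[OF mv order_refl, of x1] x p by auto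
  have Z: "Zt \<phi> x1 x2 \<ge> 0" using Zt_nonneg[OF mv12 x(2) d1] .
  have Zs: "Zt \<phi> x1 x2 / (\<rho> * (1 + \<rho>)) \<ge> 0" "Zt \<phi> x1 x2 / (1 + \<rho>) \<ge> 0" using Z rho by auto
  have A: "Av \<phi> x1 x2 \<le> (\<phi> x1 + \<phi> x2) / 2" using Av_chord[OF mv12 x(2)] .
  have zl: "Zt \<phi> x0 x1 / (r * (1 + r)) \<le> \<phi>' x1 * (x2 - x1) / (6 * r^2 * (1 + r))"
    using Z_left[OF mv01 x r(1)] .
  define P where "P = \<phi>' x1 * (x2 - x1)"
  have P: "P \<ge> 0" using d1 x by (simp add: P_def)
  have b1: "1 / (6 * r^2 * (1 + r)) \<le> 8122/10000" using ratio_bound1 r by simp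
  have "\<phi>' x1 * (x2 - x1) / (6 * r^2 * (1 + r)) = P * (1 / (6 * r^2 * (1 + r)))" by (simp add: P_def)
  also have "\<dots> \<le> P * (8122/10000)" using b1 P by (intro mult_left_mono) auto
  finally have zl2: "\<phi>' x1 * (x2 - x1) / (6 * r^2 * (1 + r)) \<le> P * (8122/10000)" .
  have zl': "Zt \<phi> x0 x1 / (r * (1 + r)) \<le> P * (8122/10000)" using zl zl2 by (rule order_trans)
  have D: "P \<le> \<phi> x2 - \<phi> x1" using MV_le[OF mv12 order_refl, of x2] x by (auto simp: P_def)
  show ?thesis using Zs A zl' D P p by argo
qed

lemma S1_edge:
  assumes mv: "MV \<phi> \<phi>' x0 x1" and x: "x0 < x1" and p: "\<phi> x0 > 0" "\<phi>' x0 \<ge> 0" and rho: "\<rho> > 0"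
  shows "2 * \<phi> x1 + 2 * (Zt \<phi> x0 x1 / (\<rho> * (1 + \<rho>))) - (Av \<phi> x0 x1 - Zt \<phi> x0 x1 / (1 + \<rho>)) > 0"
proof -
  have Z: "Zt \<phi> x0 x1 \<ge> 0" using Zt_nonneg[OF mv x p(2)] .
  have Zs: "Zt \<phi> x0 x1 / (\<rho> * (1 + \<rho>)) \<ge> 0" "Zt \<phi> x0 x1 / (1 + \<rho>) \<ge> 0" using Z rho by auto
  have A: "Av \<phi> x0 x1 \<le> (\<phi> x0 + \<phi> x1) / 2" using Av_chord[OF mv x] .
  have "\<phi>' x0 * (x1 - x0) \<le> \<phi> x1 - \<phi> x0" using MV_le[OF mv order_refl, of x1] x by auto
  moreover have "\<phi>' x0 * (x1 - x0) \<ge> 0" using p x by simp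
  ultimately show ?thesis using Zs A p by argo
qed


context
  fixes \<alpha> :: real and t :: "nat \<Rightarrow> real" and N :: nat
  assumes al: "0 < \<alpha>" "\<alpha> < 1"
    and mesh: "\<And>k. 1 \<le> k \<Longrightarrow> k \<le> N \<Longrightarrow> t (k - 1) < t k"
    and rat: "\<And>k. 2 \<le> k \<Longrightarrow> k \<le> N \<Longrightarrow> ratio t k \<ge> 385/1000"
begin

lemma tlt: "i < j \<Longrightarrow> j \<le> N \<Longrightarrow> t i < t j"
proof (induction j)
  case 0 then show ?case by simp
next
  case (Suc j)
  have s: "t j < t (Suc j)" using mesh[of "Suc j"] Suc.prems by simp
  show ?case
  proof (cases "i = j")
    case True then show ?thesis using s by simp
  next
    case False
    then have "t i < t j" using Suc by simp
    then show ?thesis using s by simp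
  qed
qed

lemma tle: "i \<le> j \<Longrightarrow> j \<le> N \<Longrightarrow> t i \<le> t j"
  using tlt[of i j] by (cases "i = j") auto

lemma c_gt: "1 \<le> m \<Longrightarrow> m \<le> N \<Longrightarrow> t (m-1) < t_shift \<alpha> t m"
  using tshift_gt[of t m \<alpha>] mesh[of m] al by simp

lemma c_lt: "1 \<le> m \<Longrightarrow> m \<le> N \<Longrightarrow> t_shift \<alpha> t m < t m"
  using tshift_lt[of t m \<alpha>] mesh[of m] al by simp

lemma c_mono: "2 \<le> m \<Longrightarrow> m \<le> N \<Longrightarrow> t_shift \<alpha> t (m-1) < t_shift \<alpha> t m"
proof -
  assume m: "2 \<le> m" "m \<le> N"
  have "t_shift \<alpha> t (m-1) < t (m-1)" using c_lt[of "m-1"] m by simp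
  also have "\<dots> < t_shift \<alpha> t m" using c_gt[of m] m by simp
  finally show ?thesis .
qed

lemma f_MV: "1 \<le> m \<Longrightarrow> m \<le> N \<Longrightarrow> a \<le> b \<Longrightarrow> b \<le> t (m-1) \<Longrightarrow>
    MV (varpi \<alpha> t m) (fder \<alpha> (t_shift \<alpha> t m)) a b"
  unfolding varpi_fpow using c_gt[of m] al by (intro fpow_MV) auto

lemma h_MV: "2 \<le> m \<Longrightarrow> m \<le> N \<Longrightarrow> a \<le> b \<Longrightarrow> b \<le> t (m-2) \<Longrightarrow>
    MV (\<lambda>s. varpi \<alpha> t (m-1) s - varpi \<alpha> t m s)
       (\<lambda>s. fder \<alpha> (t_shift \<alpha> t (m-1)) s - fder \<alpha> (t_shift \<alpha> t m) s) a b"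
proof -
  assume m: "2 \<le> m" "m \<le> N" and ab: "a \<le> b" "b \<le> t (m-2)"
  have "t (m-1-1) < t_shift \<alpha> t (m-1)" using c_gt[of "m-1"] m by simp
  moreover have "m - 1 - 1 = m - 2" by simp
  ultimately have "b < t_shift \<alpha> t (m-1)" using ab by simp
  then show ?thesis unfolding varpi_fpow using c_mono[OF m] al ab by (intro hdiff_MV) auto
qed

lemma f_pos: "1 \<le> m \<Longrightarrow> m \<le> N \<Longrightarrow> s \<le> t (m-1) \<Longrightarrow> varpi \<alpha> t m s > 0 \<and> fder \<alpha> (t_shift \<alpha> t m) s > 0"
  unfolding varpi_fpow using c_gt[of m] al by (auto intro!: fpow_pos fder_pos)

lemma h_pos: "2 \<le> m \<Longrightarrow> m \<le> N \<Longrightarrow> s \<le> t (m-2) \<Longrightarrow>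
   varpi \<alpha> t (m-1) s - varpi \<alpha> t m s > 0 \<and> fder \<alpha> (t_shift \<alpha> t (m-1)) s - fder \<alpha> (t_shift \<alpha> t m) s > 0"
proof -
  assume m: "2 \<le> m" "m \<le> N" and s: "s \<le> t (m-2)"
  have "t (m-1-1) < t_shift \<alpha> t (m-1)" using c_gt[of "m-1"] m by simp
  moreover have "m - 1 - 1 = m - 2" by simp
  ultimately have "s < t_shift \<alpha> t (m-1)" using s by simp
  then show ?thesis unfolding varpi_fpow
    using fpow_diff_pos[OF _ c_mono[OF m] al] fder_diff_pos[OF _ c_mono[OF m] al] by blast
qed

lemma ratio_ge: "2 \<le> k \<Longrightarrow> k \<le> N \<Longrightarrow> ratio t k \<ge> 385/1000" by (rule rat)

lemma ratio_gt0: "2 \<le> k \<Longrightarrow> k \<le> N \<Longrightarrow> ratio t k > 0" using rat[of k] by simp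

lemma vals:
  assumes n: "2 \<le> n" "n \<le> N"
  defines "\<tau> \<equiv> t (n-1) - t (n-2)"
  shows "\<tau> > 0"
    and "t_shift \<alpha> t (n-1) - t (n-2) = \<tau> * (1 - \<alpha>/2)"
    and "t_shift \<alpha> t n - t (n-2) = \<tau> * (1 + (1 - \<alpha>/2) * ratio t n)"
    and "t_shift \<alpha> t n - (t (n-2) + t (n-1)) / 2 = \<tau> * (1/2 + (1 - \<alpha>/2) * ratio t n)"
    and "t_shift \<alpha> t n - t (n-1) = \<tau> * ((1 - \<alpha>/2) * ratio t n)"
proof -
  have n1: "n - 1 - 1 = n - 2" by simp
  show tp: "\<tau> > 0" using mesh[of "n-1"] n by (simp add: \<tau>_def numeral_2_eq_2)
  have r: "ratio t n * \<tau> = t n - t (n-1)"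
    using ratio_eq[of n t] n tp by (simp add: \<tau>_def)
  show "t_shift \<alpha> t (n-1) - t (n-2) = \<tau> * (1 - \<alpha>/2)"
    unfolding t_shift_def \<tau>_def n1 by (simp add: algebra_simps)
  have e1: "\<tau> * (1 + (1 - \<alpha>/2) * ratio t n) = \<tau> + (1 - \<alpha>/2) * (t n - t (n-1))"
    unfolding r[symmetric] by (simp add: algebra_simps)
  have x1: "t_shift \<alpha> t n - t (n-2) = \<tau> + (1 - \<alpha>/2) * (t n - t (n-1))"
    unfolding t_shift_def \<tau>_def by (simp add: algebra_simps)
  show "t_shift \<alpha> t n - t (n-2) = \<tau> * (1 + (1 - \<alpha>/2) * ratio t n)"
    using trans[OF x1 e1[symmetric]] .
  have e2: "\<tau> * (1/2 + (1 - \<alpha>/2) * ratio t n) = \<tau>/2 + (1 - \<alpha>/2) * (t n - t (n-1))"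
    unfolding r[symmetric] by (simp add: algebra_simps)
  have x2: "t_shift \<alpha> t n - (t (n-2) + t (n-1)) / 2 = \<tau>/2 + (1 - \<alpha>/2) * (t n - t (n-1))"
    unfolding t_shift_def \<tau>_def by (simp add: field_simps)
  show "t_shift \<alpha> t n - (t (n-2) + t (n-1)) / 2 = \<tau> * (1/2 + (1 - \<alpha>/2) * ratio t n)"
    using trans[OF x2 e2[symmetric]] .
  have e3: "\<tau> * ((1 - \<alpha>/2) * ratio t n) = (1 - \<alpha>/2) * (t n - t (n-1))"
    unfolding r[symmetric] by (simp add: algebra_simps)
  have x3: "t_shift \<alpha> t n - t (n-1) = (1 - \<alpha>/2) * (t n - t (n-1))"
    unfolding t_shift_def by (simp add: algebra_simps)
  show "t_shift \<alpha> t n - t (n-1) = \<tau> * ((1 - \<alpha>/2) * ratio t n)"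
    using trans[OF x3 e3[symmetric]] .
qed

lemma S3_link:
  assumes n: "2 \<le> n" "n \<le> N"
  shows "3/4 * varpi \<alpha> t (n-1) (t (n-2)) + varpi \<alpha> t n (t (n-2))
     - varpi \<alpha> t n ((t (n-2) + t (n-1)) / 2) / 2 - varpi \<alpha> t n (t (n-1)) / 4 > 0"
proof -
  define \<tau> where "\<tau> = t (n-1) - t (n-2)"
  define \<rho> where "\<rho> = ratio t n"
  define G where "G = Gamma (1 - \<alpha>)"
  have G: "G > 0" unfolding G_def using al by (intro Gamma_pos1) auto
  note v = vals[OF n, folded \<tau>_def]
  have r: "\<rho> \<ge> 385/1000" using rat[OF n] by (simp add: \<rho>_def)
  have tp: "\<tau> > 0" using v(1) .
  have u1: "1 - \<alpha>/2 > 0" using al by simp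
  have rp: "\<rho> > 0" using r by simp
  have pos: "1 + (1 - \<alpha>/2) * \<rho> > 0" "1/2 + (1 - \<alpha>/2) * \<rho> > 0" "(1 - \<alpha>/2) * \<rho> > 0"
    using u1 rp by (auto intro!: add_pos_pos)
  have pm: "\<And>u. u > 0 \<Longrightarrow> (\<tau> * u) powr (- \<alpha>) / G = \<tau> powr (- \<alpha>) / G * u powr (- \<alpha>)"
    using tp by (simp add: powr_mult)
  have F1: "varpi \<alpha> t (n-1) (t (n-2)) = \<tau> powr (- \<alpha>) / G * (1 - \<alpha>/2) powr (- \<alpha>)"
    unfolding varpi_fpow fpow_def v(2) G_def[symmetric] using pm[OF u1] .
  have F2: "varpi \<alpha> t n (t (n-2)) = \<tau> powr (- \<alpha>) / G * (1 + (1 - \<alpha>/2) * \<rho>) powr (- \<alpha>)"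
    unfolding varpi_fpow fpow_def v(3) G_def[symmetric] \<rho>_def[symmetric] using pm[OF pos(1)] .
  have Fm: "varpi \<alpha> t n ((t (n-2) + t (n-1)) / 2) = \<tau> powr (- \<alpha>) / G * (1/2 + (1 - \<alpha>/2) * \<rho>) powr (- \<alpha>)"
    unfolding varpi_fpow fpow_def v(4) G_def[symmetric] \<rho>_def[symmetric] using pm[OF pos(2)] .
  have F3: "varpi \<alpha> t n (t (n-1)) = \<tau> powr (- \<alpha>) / G * ((1 - \<alpha>/2) * \<rho>) powr (- \<alpha>)"
    unfolding varpi_fpow fpow_def v(5) G_def[symmetric] \<rho>_def[symmetric] using pm[OF pos(3)] .
  have sc: "3/4 * (1 - \<alpha>/2) powr (- \<alpha>) + (1 + (1 - \<alpha>/2) * \<rho>) powr (- \<alpha>)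
     - (1/2 + (1 - \<alpha>/2) * \<rho>) powr (- \<alpha>) / 2 - ((1 - \<alpha>/2) * \<rho>) powr (- \<alpha>) / 4 > 0"
    using s3_scalar[OF al r] .
  have K: "\<tau> powr (- \<alpha>) / G > 0" using tp G by simp
  have "\<tau> powr (- \<alpha>) / G * (3/4 * (1 - \<alpha>/2) powr (- \<alpha>) + (1 + (1 - \<alpha>/2) * \<rho>) powr (- \<alpha>)
     - (1/2 + (1 - \<alpha>/2) * \<rho>) powr (- \<alpha>) / 2 - ((1 - \<alpha>/2) * \<rho>) powr (- \<alpha>) / 4) > 0"
    by (rule mult_pos_pos[OF K sc])
  then show ?thesis unfolding F1 F2 Fm F3 by (simp add: algebra_simps)
qed

lemma F3_link:
  assumes n: "2 \<le> n" "n \<le> N"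
  shows "varpi \<alpha> t n (t (n-1)) \<le> 26/10 * varpi \<alpha> t (n-1) (t (n-2))"
proof -
  define \<tau> where "\<tau> = t (n-1) - t (n-2)"
  define \<rho> where "\<rho> = ratio t n"
  define G where "G = Gamma (1 - \<alpha>)"
  have G: "G > 0" unfolding G_def using al by (intro Gamma_pos1) auto
  note v = vals[OF n, folded \<tau>_def]
  have r: "\<rho> \<ge> 385/1000" using rat[OF n] by (simp add: \<rho>_def)
  have tp: "\<tau> > 0" using v(1) .
  have u1: "1 - \<alpha>/2 > 0" using al by simp
  have rp: "\<rho> > 0" using r by simp
  have "varpi \<alpha> t n (t (n-1)) = (\<rho> * (\<tau> * (1 - \<alpha>/2))) powr (- \<alpha>) / G"
    unfolding varpi_fpow fpow_def v(5) G_def[symmetric] \<rho>_def[symmetric] by (simp add: algebra_simps)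
  also have "\<dots> = \<rho> powr (- \<alpha>) * ((\<tau> * (1 - \<alpha>/2)) powr (- \<alpha>) / G)"
    using rp tp u1 by (simp add: powr_mult)
  also have "\<dots> \<le> 26/10 * ((\<tau> * (1 - \<alpha>/2)) powr (- \<alpha>) / G)"
    using rho_powr_bound[OF r al] G by (intro mult_right_mono) auto
  also have "(\<tau> * (1 - \<alpha>/2)) powr (- \<alpha>) / G = varpi \<alpha> t (n-1) (t (n-2))"
    unfolding varpi_fpow fpow_def v(2) G_def[symmetric] ..
  finally show ?thesis .
qed

lemma K_pos:
  assumes n: "2 \<le> n" "n \<le> N" and k: "1 \<le> k" "k \<le> n - 1"
  shows "Akern \<alpha> t n (n-k) > 0"
proof -
  have tn: "t (n-1) < t n" using mesh[of n] n by simp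
  show ?thesis
  proof (cases "k = 1")
    case True
    have e: "Akern \<alpha> t n (n-1) = Kedge t (varpi \<alpha> t n)"
      using Akern_edge[OF n(1) _ tn al] tle[of 1 "n-1"] n by simp
    have "Kedge t (varpi \<alpha> t n) > 0"
    proof (rule Kedge_pos)
      show "MV (varpi \<alpha> t n) (fder \<alpha> (t_shift \<alpha> t n)) (t 0) (t 1)"
        using f_MV[of n "t 0" "t 1"] tle[of 1 "n-1"] tle[of 0 1] n by simp
      show "t 0 < t 1" using tlt[of 0 1] n by simp
      show "ratio t 2 > 0" using ratio_gt0[of 2] n by simp
      show "varpi \<alpha> t n (t 0) > 0" "fder \<alpha> (t_shift \<alpha> t n) (t 0) \<ge> 0"
        using f_pos[of n "t 0"] tle[of 0 "n-1"] n by auto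
    qed
    then show ?thesis using e True by simp
  next
    case False
    then have k2: "2 \<le> k" using k by simp
    have e: "Akern \<alpha> t n (n-k) = Kint t (varpi \<alpha> t n) k"
      using Akern_int[OF k2 _ _ tn al] tle[of k "n-1"] k n by simp
    have "Kint t (varpi \<alpha> t n) k > 0"
    proof (rule Kint_pos[OF k2])
      show "MV (varpi \<alpha> t n) (fder \<alpha> (t_shift \<alpha> t n)) (t (k-2)) (t k)"
        using f_MV[of n "t (k-2)" "t k"] tle[of k "n-1"] tle[of "k-2" k] k n by simp
      show "t (k-2) < t (k-1)" "t (k-1) < t k" using tlt[of "k-2" "k-1"] tlt[of "k-1" k] k2 k n by auto
      show "ratio t (k+1) > 0" using ratio_gt0[of "k+1"] k2 k n by simp
      show "varpi \<alpha> t n (t (k-1)) > 0" "fder \<alpha> (t_shift \<alpha> t n) (t (k-2)) \<ge> 0"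
        using f_pos[of n "t (k-1)"] f_pos[of n "t (k-2)"] tle[of "k-1" "n-1"] tle[of "k-2" "n-1"] k n
        by (auto simp: less_imp_le)
    qed
    then show ?thesis using e by simp
  qed
qed

lemma K_mono:
  assumes n: "2 \<le> n" "n \<le> N" and k: "1 \<le> k" "k \<le> n - 1"
  shows "Akern \<alpha> t n (n-k-1) > Akern \<alpha> t n (n-k)"
proof -
  have tn: "t (n-1) < t n" using mesh[of n] n by simp
  have ek: "n - k - 1 = n - (k+1)" by simp
  show ?thesis
  proof (cases "k = n - 1")
    case True
    then have e0: "n - k - 1 = 0" by simp
    have top: "Akern \<alpha> t n 0 = 2 * varpi \<alpha> t n (t (n-1))
      + 2 * (Zt (varpi \<alpha> t n) (t (n-2)) (t (n-1)) / (ratio t n * (1 + ratio t n)))"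
      using Akern_top[OF n(1) tn al] unfolding varpi_fpow by simp
    have rho: "ratio t n > 0" using ratio_gt0 n by simp
    show ?thesis
    proof (cases "n = 2")
      case True
      then have k1: "k = 1" using k by simp
      have e: "Akern \<alpha> t n (n-k) = Kedge t (varpi \<alpha> t n)"
        using Akern_edge[OF n(1) _ tn al] k1 True by simp
      have "2 * varpi \<alpha> t n (t 1) + 2 * (Zt (varpi \<alpha> t n) (t 0) (t 1) / (ratio t n * (1 + ratio t n)))
          - (Av (varpi \<alpha> t n) (t 0) (t 1) - Zt (varpi \<alpha> t n) (t 0) (t 1) / (1 + ratio t n)) > 0"
      proof (rule S1_edge[OF _ _ _ _ rho])
        show "MV (varpi \<alpha> t n) (fder \<alpha> (t_shift \<alpha> t n)) (t 0) (t 1)"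
          using f_MV[of n "t 0" "t 1"] tle[of 0 1] True n by simp
        show "t 0 < t 1" using tlt[of 0 1] n by simp
        show "varpi \<alpha> t n (t 0) > 0" "fder \<alpha> (t_shift \<alpha> t n) (t 0) \<ge> 0"
          using f_pos[of n "t 0"] tle[of 0 "n-1"] n by auto
      qed
      then show ?thesis unfolding e0 top e Kedge_def using True by simp
    next
      case False
      then have n3: "3 \<le> n" using n by simp
      have e: "Akern \<alpha> t n (n-k) = Kint t (varpi \<alpha> t n) (n-1)"
        using Akern_int[of "n-1" n t \<alpha>] True n3 tn al by simp
      have i1: "n - 1 - 1 = n - 2" "n - 1 - 2 = n - 3" "n - 1 + 1 = n" using n3 by auto
      have "2 * varpi \<alpha> t n (t (n-1)) + 2 * (Zt (varpi \<alpha> t n) (t (n-2)) (t (n-1)) / (ratio t n * (1 + ratio t n)))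
          - (Av (varpi \<alpha> t n) (t (n-2)) (t (n-1)) + Zt (varpi \<alpha> t n) (t (n-3)) (t (n-2)) / (ratio t (n-1) * (1 + ratio t (n-1)))
             - Zt (varpi \<alpha> t n) (t (n-2)) (t (n-1)) / (1 + ratio t n)) > 0"
      proof (rule S1_int[OF _ _ _ _ _ _ _ rho])
        show "MV (varpi \<alpha> t n) (fder \<alpha> (t_shift \<alpha> t n)) (t (n-3)) (t (n-1))"
          using f_MV[of n "t (n-3)" "t (n-1)"] tle[of "n-3" "n-1"] n by simp
        show "t (n-3) < t (n-2)" "t (n-2) < t (n-1)" using tlt[of "n-3" "n-2"] tlt[of "n-2" "n-1"] n3 n by auto
        show "ratio t (n-1) = (t (n-1) - t (n-2)) / (t (n-2) - t (n-3))"
          using ratio_eq[of "n-1" t] n3 i1 by simp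
        show "ratio t (n-1) \<ge> 385/1000" using rat[of "n-1"] n3 n by simp
        show "varpi \<alpha> t n (t (n-2)) > 0" "fder \<alpha> (t_shift \<alpha> t n) (t (n-3)) \<ge> 0"
          using f_pos[of n "t (n-2)"] f_pos[of n "t (n-3)"] tle[of "n-2" "n-1"] tle[of "n-3" "n-1"] n
          by (auto simp: less_imp_le)
      qed
      then show ?thesis unfolding e0 top e Kint_def i1 by simp
    qed
  next
    case False
    then have kn: "k + 1 \<le> n - 1" using k by simp
    show ?thesis
    proof (cases "k = 1")
      case True
      have e1: "Akern \<alpha> t n (n-1) = Kedge t (varpi \<alpha> t n)"
        using Akern_edge[OF n(1) _ tn al] tle[of 1 "n-1"] n by simp
      have e2: "Akern \<alpha> t n (n-2) = Kint t (varpi \<alpha> t n) 2"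
        using Akern_int[of 2 n t \<alpha>] tle[of 2 "n-1"] kn True n tn al by simp
      have "Kint t (varpi \<alpha> t n) 2 - Kedge t (varpi \<alpha> t n) > 0"
      proof (rule Kmono_edge)
        show "MV (varpi \<alpha> t n) (fder \<alpha> (t_shift \<alpha> t n)) (t 0) (t 2)"
          using f_MV[of n "t 0" "t 2"] tle[of 2 "n-1"] tle[of 0 2] kn True n by simp
        show "t 0 < t 1" "t 1 < t 2" using tlt[of 0 1] tlt[of 1 2] kn True n by auto
        have "3 \<le> N" using kn True n by simp
        then show "ratio t 3 \<ge> 0" using ratio_gt0[of 3] by simp
        show "fder \<alpha> (t_shift \<alpha> t n) (t 0) > 0" using f_pos[of n "t 0"] tle[of 0 "n-1"] n by auto
      qed
      then show ?thesis using e1 e2 True by (simp add: numeral_2_eq_2)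
    next
      case False
      then have k2: "2 \<le> k" using k by simp
      have e1: "Akern \<alpha> t n (n-k) = Kint t (varpi \<alpha> t n) k"
        using Akern_int[OF k2 _ _ tn al] tle[of k "n-1"] k n by simp
      have e2: "Akern \<alpha> t n (n-(k+1)) = Kint t (varpi \<alpha> t n) (k+1)"
        using Akern_int[of "k+1" n t \<alpha>] tle[of "k+1" "n-1"] kn k2 n tn al by simp
      have "Kint t (varpi \<alpha> t n) (k+1) - Kint t (varpi \<alpha> t n) k > 0"
      proof (rule Kmono_int[OF k2])
        show "MV (varpi \<alpha> t n) (fder \<alpha> (t_shift \<alpha> t n)) (t (k-2)) (t (k+1))"
          using f_MV[of n "t (k-2)" "t (k+1)"] tle[of "k+1" "n-1"] tle[of "k-2" "k+1"] kn n by simp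
        show "t (k-2) < t (k-1)" "t (k-1) < t k" "t k < t (k+1)"
          using tlt[of "k-2" "k-1"] tlt[of "k-1" k] tlt[of k "k+1"] k2 kn n by auto
        show "ratio t k \<ge> 385/1000" using rat[of k] k2 k n by simp
        have "k + 2 \<le> N" using kn n by simp
        then show "ratio t (k+2) \<ge> 0" using ratio_gt0[of "k+2"] by simp
        show "fder \<alpha> (t_shift \<alpha> t n) (t (k-1)) > 0" using f_pos[of n "t (k-1)"] tle[of "k-1" "n-1"] k n by auto
      qed
      then show ?thesis using e1 e2 ek by simp
    qed
  qed
qed

lemma K_b:
  assumes n: "2 \<le> n" "n \<le> N" and k: "1 \<le> k" "k \<le> n - 1"
  shows "Akern \<alpha> t (n-1) (n-1-k) > Akern \<alpha> t n (n-k)"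
proof -
  define h where "h = (\<lambda>s. varpi \<alpha> t (n-1) s - varpi \<alpha> t n s)"
  define h' where "h' = (\<lambda>s. fder \<alpha> (t_shift \<alpha> t (n-1)) s - fder \<alpha> (t_shift \<alpha> t n) s)"
  have tn: "t (n-1) < t n" using mesh[of n] n by simp
  have tn1: "t (n-1-1) < t (n-1)" using mesh[of "n-1"] n by simp
  have i1: "n - 1 - 1 = n - 2" by simp
  show ?thesis
  proof (cases "k \<le> n - 2")
    case True
    then have n3: "3 \<le> n" using k by simp
    have hMV: "\<And>a b. a \<le> b \<Longrightarrow> b \<le> t (n-2) \<Longrightarrow> MV h h' a b"
      unfolding h_def h'_def using h_MV n by simp
    have hp: "\<And>s. s \<le> t (n-2) \<Longrightarrow> h s > 0 \<and> h' s > 0"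
      unfolding h_def h'_def using h_pos n by simp
    show ?thesis
    proof (cases "k = 1")
      case k1: True
      have e1: "Akern \<alpha> t (n-1) (n-1-k) = Kedge t (varpi \<alpha> t (n-1))"
        using Akern_edge[of "n-1" t \<alpha>] tn1 tle[of 1 "n-1-1"] k1 n3 n al by simp
      have e2: "Akern \<alpha> t n (n-k) = Kedge t (varpi \<alpha> t n)"
        using Akern_edge[OF n(1) _ tn al] tle[of 1 "n-1"] k1 n by simp
      have t12: "t 1 \<le> t (n-2)" using tle[of 1 "n-2"] n3 n by simp
      have cf1: "continuous_on {t 0..t 1} (varpi \<alpha> t (n-1))"
        using MV_cont[OF f_MV[of "n-1" "t 0" "t 1"]] tle[of 0 1] t12 n3 n i1 by simp
      have cf2: "continuous_on {t 0..t 1} (varpi \<alpha> t n)"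
        using MV_cont[OF f_MV[of n "t 0" "t 1"]] tle[of 0 1] tle[of 1 "n-1"] n by simp
      have d: "Kedge t h = Kedge t (varpi \<alpha> t (n-1)) - Kedge t (varpi \<alpha> t n)"
        unfolding h_def using Kedge_diff[OF _ cf1 cf2] tle[of 0 1] n by simp
      have "Kedge t h > 0"
      proof (rule Kedge_pos)
        show "MV h h' (t 0) (t 1)" using hMV tle[of 0 1] t12 n by simp
        show "t 0 < t 1" using tlt[of 0 1] n by simp
        show "ratio t 2 > 0" using ratio_gt0[of 2] n by simp
        show "h (t 0) > 0" "h' (t 0) \<ge> 0" using hp[of "t 0"] tle[of 0 "n-2"] n by auto
      qed
      then show ?thesis using d e1 e2 by simp
    next
      case False
      then have k2: "2 \<le> k" using k by simp
      have e1: "Akern \<alpha> t (n-1) (n-1-k) = Kint t (varpi \<alpha> t (n-1)) k"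
        using Akern_int[of k "n-1" t \<alpha>] tn1 tle[of k "n-1-1"] k2 True n al by simp
      have e2: "Akern \<alpha> t n (n-k) = Kint t (varpi \<alpha> t n) k"
        using Akern_int[OF k2 _ _ tn al] tle[of k "n-1"] k n by simp
      have tk: "t k \<le> t (n-2)" using tle[of k "n-2"] True n by simp
      have cf1: "continuous_on {t (k-2)..t k} (varpi \<alpha> t (n-1))"
        using MV_cont[OF f_MV[of "n-1" "t (k-2)" "t k"]] tle[of "k-2" k] tk n3 n i1 True by simp
      have cf2: "continuous_on {t (k-2)..t k} (varpi \<alpha> t n)"
        using MV_cont[OF f_MV[of n "t (k-2)" "t k"]] tle[of "k-2" k] tle[of k "n-1"] k n by simp
      have d: "Kint t h k = Kint t (varpi \<alpha> t (n-1)) k - Kint t (varpi \<alpha> t n) k"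
        unfolding h_def using Kint_diff[OF k2 _ _ cf1 cf2] tle[of "k-2" "k-1"] tle[of "k-1" k] k n by simp
      have "Kint t h k > 0"
      proof (rule Kint_pos[OF k2])
        show "MV h h' (t (k-2)) (t k)" using hMV tle[of "k-2" k] tk k n by simp
        show "t (k-2) < t (k-1)" "t (k-1) < t k" using tlt[of "k-2" "k-1"] tlt[of "k-1" k] k2 k n by auto
        show "ratio t (k+1) > 0" using ratio_gt0[of "k+1"] k2 k n by simp
        show "h (t (k-1)) > 0" "h' (t (k-2)) \<ge> 0"
          using hp[of "t (k-1)"] hp[of "t (k-2)"] tle[of "k-1" "n-2"] tle[of "k-2" "n-2"] True n
          by (auto simp: less_imp_le)
      qed
      then show ?thesis using d e1 e2 by simp
    qed
  next
    case False
    then have kn: "k = n - 1" using k by simp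
    have rho: "ratio t n > 0" using ratio_gt0 n by simp
    have F3: "varpi \<alpha> t n (t (n-1)) \<le> 26/10 * varpi \<alpha> t (n-1) (t (n-2))" using F3_link[OF n] .
    have F12: "varpi \<alpha> t (n-1) (t (n-2)) - varpi \<alpha> t n (t (n-2)) > 0" using h_pos[OF n order_refl] by simp
    have F1p: "varpi \<alpha> t (n-1) (t (n-2)) > 0" using f_pos[of "n-1" "t (n-2)"] n i1 by simp
    have mvn: "MV (varpi \<alpha> t n) (fder \<alpha> (t_shift \<alpha> t n)) (t (n-2)) (t (n-1))"
      using f_MV[of n "t (n-2)" "t (n-1)"] tle[of "n-2" "n-1"] n by simp
    have t21: "t (n-2) < t (n-1)" using tn1 i1 by simp
    have Av: "Av (varpi \<alpha> t n) (t (n-2)) (t (n-1)) \<le> (varpi \<alpha> t n (t (n-2)) + varpi \<alpha> t n (t (n-1))) / 2"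
      using Av_chord[OF mvn t21] .
    have Zn': "Zt (varpi \<alpha> t n) (t (n-2)) (t (n-1)) \<ge> 0"
      using Zt_nonneg[OF mvn t21] f_pos[of n "t (n-2)"] tle[of "n-2" "n-1"] n by (auto simp: less_imp_le)
    have Zn'': "Zt (varpi \<alpha> t n) (t (n-2)) (t (n-1)) / (1 + ratio t n) \<ge> 0" using Zn' rho by simp
    show ?thesis
    proof (cases "n = 2")
      case True
      have e1: "Akern \<alpha> t (n-1) (n-1-k) = 2 * varpi \<alpha> t 1 (t 0)"
        using Akern_top1[of t \<alpha>] tlt[of 0 1] True kn n al unfolding varpi_fpow by simp
      have e2: "Akern \<alpha> t n (n-k) = Kedge t (varpi \<alpha> t n)"
        using Akern_edge[OF n(1) _ tn al] kn True by simp
      show ?thesis unfolding e1 e2 Kedge_def using Av Zn'' F3 F12 F1p True by simp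
    next
      case False
      then have n3: "3 \<le> n" using n by simp
      have i2: "n - 1 - 2 = n - 3" "n - 1 + 1 = n" "n - (n - 1) = 1" using n3 by auto
      have e1: "Akern \<alpha> t (n-1) (n-1-k) = 2 * varpi \<alpha> t (n-1) (t (n-2))
          + 2 * (Zt (varpi \<alpha> t (n-1)) (t (n-3)) (t (n-2)) / (ratio t (n-1) * (1 + ratio t (n-1))))"
        using Akern_top[of "n-1" t \<alpha>] tn1 kn n3 al i1 i2 unfolding varpi_fpow by simp
      have e2: "Akern \<alpha> t n (n-k) = Kint t (varpi \<alpha> t n) (n-1)"
        using Akern_int[of "n-1" n t \<alpha>] kn n3 tn al by simp
      define D where "D = ratio t (n-1) * (1 + ratio t (n-1))"
      have rp1: "ratio t (n-1) > 0" using ratio_gt0[of "n-1"] n3 n by simp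
      then have D: "D > 0" by (simp add: D_def)
      have hMV: "MV (\<lambda>s. varpi \<alpha> t (n-1) s - varpi \<alpha> t n s)
          (\<lambda>s. fder \<alpha> (t_shift \<alpha> t (n-1)) s - fder \<alpha> (t_shift \<alpha> t n) s) (t (n-3)) (t (n-2))"
        using h_MV[OF n, of "t (n-3)" "t (n-2)"] tle[of "n-3" "n-2"] n by simp
      have t32: "t (n-3) < t (n-2)" using tlt[of "n-3" "n-2"] n3 n by simp
      have Zh: "Zt (\<lambda>s. varpi \<alpha> t (n-1) s - varpi \<alpha> t n s) (t (n-3)) (t (n-2)) \<ge> 0"
        using Zt_nonneg[OF hMV t32] h_pos[OF n, of "t (n-3)"] tle[of "n-3" "n-2"] n by (auto simp: less_imp_le)
      have mv1: "MV (varpi \<alpha> t (n-1)) (fder \<alpha> (t_shift \<alpha> t (n-1))) (t (n-3)) (t (n-2))"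
        using f_MV[of "n-1" "t (n-3)" "t (n-2)"] tle[of "n-3" "n-2"] n3 n i1 by simp
      have mv2: "MV (varpi \<alpha> t n) (fder \<alpha> (t_shift \<alpha> t n)) (t (n-3)) (t (n-2))"
        using f_MV[of n "t (n-3)" "t (n-2)"] tle[of "n-3" "n-2"] tle[of "n-2" "n-1"] n by simp
      have Zd: "Zt (\<lambda>s. varpi \<alpha> t (n-1) s - varpi \<alpha> t n s) (t (n-3)) (t (n-2))
          = Zt (varpi \<alpha> t (n-1)) (t (n-3)) (t (n-2)) - Zt (varpi \<alpha> t n) (t (n-3)) (t (n-2))"
        by (rule Zt_diff[OF MV_integrable_w[OF mv1] MV_integrable_w[OF mv2]])
      have Zn: "Zt (varpi \<alpha> t n) (t (n-3)) (t (n-2)) \<ge> 0"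
        using Zt_nonneg[OF mv2 t32] f_pos[of n "t (n-3)"] tle[of "n-3" "n-1"] n by (auto simp: less_imp_le)
      have q1: "Zt (varpi \<alpha> t n) (t (n-3)) (t (n-2)) / D \<le> Zt (varpi \<alpha> t (n-1)) (t (n-3)) (t (n-2)) / D"
        using Zh Zd D by (intro divide_right_mono) auto
      have q2: "Zt (varpi \<alpha> t n) (t (n-3)) (t (n-2)) / D \<ge> 0" using Zn D by simp
      have K: "Kint t (varpi \<alpha> t n) (n-1) = Av (varpi \<alpha> t n) (t (n-2)) (t (n-1))
         + Zt (varpi \<alpha> t n) (t (n-3)) (t (n-2)) / D - Zt (varpi \<alpha> t n) (t (n-2)) (t (n-1)) / (1 + ratio t n)"
        unfolding Kint_def D_def i1 i2 by simp
      show ?thesis unfolding e1 e2 K D_def[symmetric] using Av Zn'' F3 F12 F1p q1 q2 by argo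
    qed
  qed
qed

lemma K_c_int:
  assumes n: "3 \<le> n" "n \<le> N" and k: "1 \<le> k" "k + 1 \<le> n - 2"
  shows "Akern \<alpha> t (n-1) (n-2-k) - Akern \<alpha> t (n-1) (n-1-k) > Akern \<alpha> t n (n-k-1) - Akern \<alpha> t n (n-k)"
proof -
  define h where "h = (\<lambda>s. varpi \<alpha> t (n-1) s - varpi \<alpha> t n s)"
  define h' where "h' = (\<lambda>s. fder \<alpha> (t_shift \<alpha> t (n-1)) s - fder \<alpha> (t_shift \<alpha> t n) s)"
  have n2: "2 \<le> n" using n by simp
  have tn: "t (n-1) < t n" using mesh[of n] n by simp
  have tn1: "t (n-1-1) < t (n-1)" using mesh[of "n-1"] n by simp
  have i1: "n - 1 - 1 = n - 2" by simp
  have hMV: "\<And>a b. a \<le> b \<Longrightarrow> b \<le> t (n-2) \<Longrightarrow> MV h h' a b"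
    unfolding h_def h'_def using h_MV n2 n by simp
  have hp: "\<And>s. s \<le> t (n-2) \<Longrightarrow> h s > 0 \<and> h' s > 0"
    unfolding h_def h'_def using h_pos n2 n by simp
  have cf1: "\<And>a b. a \<le> b \<Longrightarrow> b \<le> t (n-2) \<Longrightarrow> continuous_on {a..b} (varpi \<alpha> t (n-1))"
  proof -
    fix a b assume ab: "a \<le> b" "b \<le> t (n-2)"
    have "MV (varpi \<alpha> t (n-1)) (fder \<alpha> (t_shift \<alpha> t (n-1))) a b"
      using f_MV[of "n-1" a b] ab n i1 by simp
    then show "continuous_on {a..b} (varpi \<alpha> t (n-1))" by (rule MV_cont)
  qed
  have cf2: "\<And>a b. a \<le> b \<Longrightarrow> b \<le> t (n-2) \<Longrightarrow> continuous_on {a..b} (varpi \<alpha> t n)"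
  proof -
    fix a b assume "a \<le> b" "b \<le> t (n-2)"
    moreover have "t (n-2) \<le> t (n-1)" using tle[of "n-2" "n-1"] n by simp
    ultimately show "continuous_on {a..b} (varpi \<alpha> t n)" using f_MV[of n a b] MV_cont n by simp
  qed
  have kN: "k + 2 \<le> N" "k + 1 \<le> N" using k n by auto
  show ?thesis
  proof (cases "k = 1")
    case k1: True
    have t2: "t 2 \<le> t (n-2)" using tle[of 2 "n-2"] k1 k n by simp
    have L1: "Akern \<alpha> t (n-1) (n-2-k) = Kint t (varpi \<alpha> t (n-1)) 2"
      using Akern_int[of 2 "n-1" t \<alpha>] tn1 t2 k1 k n al i1 by (simp add: numeral_2_eq_2)
    have L2: "Akern \<alpha> t (n-1) (n-1-k) = Kedge t (varpi \<alpha> t (n-1))"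
      using Akern_edge[of "n-1" t \<alpha>] tn1 tle[of 1 "n-1-1"] k1 k n al by simp
    have R1: "Akern \<alpha> t n (n-k-1) = Kint t (varpi \<alpha> t n) 2"
      using Akern_int[of 2 n t \<alpha>] tn tle[of 2 "n-1"] k1 k n al by (simp add: numeral_2_eq_2)
    have R2: "Akern \<alpha> t n (n-k) = Kedge t (varpi \<alpha> t n)"
      using Akern_edge[OF n2 _ tn al] tle[of 1 "n-1"] k1 n by simp
    have t01: "t 0 \<le> t 1" "t 1 \<le> t 2" "t 1 \<le> t (n-2)" using tle[of 0 1] tle[of 1 2] tle[of 1 "n-2"] k1 k n by auto
    have d1: "Kint t h 2 = Kint t (varpi \<alpha> t (n-1)) 2 - Kint t (varpi \<alpha> t n) 2"
      unfolding h_def using Kint_diff[of 2 t "varpi \<alpha> t (n-1)" "varpi \<alpha> t n"] cf1[of "t 0" "t 2"] cf2[of "t 0" "t 2"] t01 t2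
      by simp
    have d2: "Kedge t h = Kedge t (varpi \<alpha> t (n-1)) - Kedge t (varpi \<alpha> t n)"
      unfolding h_def using Kedge_diff[OF t01(1) cf1[of "t 0" "t 1"] cf2[of "t 0" "t 1"]] t01 by simp
    have "Kint t h 2 - Kedge t h > 0"
    proof (rule Kmono_edge)
      show "MV h h' (t 0) (t 2)" using hMV t01 t2 by simp
      show "t 0 < t 1" "t 1 < t 2" using tlt[of 0 1] tlt[of 1 2] k1 k n by auto
      show "ratio t 3 \<ge> 0" using ratio_gt0[of 3] k1 kN by simp
      show "h' (t 0) > 0" using hp[of "t 0"] t01 by simp
    qed
    then show ?thesis unfolding L1 L2 R1 R2 using d1 d2 by simp
  next
    case False
    then have k2: "2 \<le> k" using k by simp
    have tk1: "t (k+1) \<le> t (n-2)" using tle[of "k+1" "n-2"] k n by simp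
    have L1: "Akern \<alpha> t (n-1) (n-2-k) = Kint t (varpi \<alpha> t (n-1)) (k+1)"
      using Akern_int[of "k+1" "n-1" t \<alpha>] tn1 tk1 k2 k n al i1 by simp
    have L2: "Akern \<alpha> t (n-1) (n-1-k) = Kint t (varpi \<alpha> t (n-1)) k"
      using Akern_int[of k "n-1" t \<alpha>] tn1 tle[of k "k+1"] tk1 k2 k n al i1 kN by simp
    have R1: "Akern \<alpha> t n (n-k-1) = Kint t (varpi \<alpha> t n) (k+1)"
      using Akern_int[of "k+1" n t \<alpha>] tn tle[of "k+1" "n-1"] k2 k n al by simp
    have R2: "Akern \<alpha> t n (n-k) = Kint t (varpi \<alpha> t n) k"
      using Akern_int[of k n t \<alpha>] tn tle[of k "n-1"] k2 k n al by simp
    have tt: "t (k-2) \<le> t (k-1)" "t (k-1) \<le> t k" "t k \<le> t (k+1)"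
      using tle[of "k-2" "k-1"] tle[of "k-1" k] tle[of k "k+1"] kN by auto
    have d1: "Kint t h (k+1) = Kint t (varpi \<alpha> t (n-1)) (k+1) - Kint t (varpi \<alpha> t n) (k+1)"
      unfolding h_def using Kint_diff[of "k+1" t "varpi \<alpha> t (n-1)" "varpi \<alpha> t n"] cf1[of "t (k-1)" "t (k+1)"]
        cf2[of "t (k-1)" "t (k+1)"] tt tk1 k2 by simp
    have d2: "Kint t h k = Kint t (varpi \<alpha> t (n-1)) k - Kint t (varpi \<alpha> t n) k"
      unfolding h_def using Kint_diff[of k t "varpi \<alpha> t (n-1)" "varpi \<alpha> t n"] cf1[of "t (k-2)" "t k"]
        cf2[of "t (k-2)" "t k"] tt tk1 k2 by simp
    have "Kint t h (k+1) - Kint t h k > 0"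
    proof (rule Kmono_int[OF k2])
      show "MV h h' (t (k-2)) (t (k+1))" using hMV tt tk1 by simp
      show "t (k-2) < t (k-1)" "t (k-1) < t k" "t k < t (k+1)"
        using tlt[of "k-2" "k-1"] tlt[of "k-1" k] tlt[of k "k+1"] k2 kN by auto
      show "ratio t k \<ge> 385/1000" using rat[of k] k2 kN by simp
      show "ratio t (k+2) \<ge> 0" using ratio_gt0[of "k+2"] k2 kN by simp
      show "h' (t (k-1)) > 0" using hp[of "t (k-1)"] tt tk1 by simp
    qed
    then show ?thesis unfolding L1 L2 R1 R2 using d1 d2 by simp
  qed
qed

lemma K_c_top:
  assumes n: "3 \<le> n" "n \<le> N"
  shows "Akern \<alpha> t (n-1) 0 - Akern \<alpha> t (n-1) 1 > Akern \<alpha> t n 1 - Akern \<alpha> t n 2"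
proof -
  define f1 where "f1 = varpi \<alpha> t (n-1)"
  define f2 where "f2 = varpi \<alpha> t n"
  define h where "h = (\<lambda>s. f1 s - f2 s)"
  define h' where "h' = (\<lambda>s. fder \<alpha> (t_shift \<alpha> t (n-1)) s - fder \<alpha> (t_shift \<alpha> t n) s)"
  define d2 where "d2 = fder \<alpha> (t_shift \<alpha> t n)"
  define d1 where "d1 = fder \<alpha> (t_shift \<alpha> t (n-1))"
  define F1 where "F1 = f1 (t (n-2))"
  define F2 where "F2 = f2 (t (n-2))"
  define fm where "fm = f2 ((t (n-2) + t (n-1)) / 2)"
  define F3 where "F3 = f2 (t (n-1))"
  define r where "r = ratio t (n-1)"
  define \<rho> where "\<rho> = ratio t n"
  have n2: "2 \<le> n" using n by simp
  have i1: "n - 1 - 1 = n - 2" "n - 1 - 2 = n - 3" "n - 1 + 1 = n" "n - 2 + 1 = n - 1" "n - (n-1) = 1"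
    "n - 2 - 1 = n - 3" "n - 2 - 2 = n - 4" using n by auto
  have tn: "t (n-1) < t n" using mesh[of n] n by simp
  have t21: "t (n-2) < t (n-1)" using tlt[of "n-2" "n-1"] n by simp
  have t32: "t (n-3) < t (n-2)" using tlt[of "n-3" "n-2"] n by simp
  have rp: "r > 0" using ratio_gt0[of "n-1"] n by (simp add: r_def)
  have rhop: "\<rho> > 0" using ratio_gt0[of n] n by (simp add: \<rho>_def)
  have hMV: "\<And>a b. a \<le> b \<Longrightarrow> b \<le> t (n-2) \<Longrightarrow> MV h h' a b"
    unfolding h_def h'_def f1_def f2_def using h_MV n2 n by simp
  have hp: "\<And>s. s \<le> t (n-2) \<Longrightarrow> h s > 0 \<and> h' s > 0"
    unfolding h_def h'_def f1_def f2_def using h_pos n2 n by simp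
  have mv1: "\<And>a b. a \<le> b \<Longrightarrow> b \<le> t (n-2) \<Longrightarrow> MV f1 d1 a b"
    unfolding f1_def d1_def using f_MV[of "n-1"] n i1 by simp
  have mv2: "\<And>a b. a \<le> b \<Longrightarrow> b \<le> t (n-1) \<Longrightarrow> MV f2 d2 a b"
    unfolding f2_def d2_def using f_MV[of n] n by simp
  have fp2: "\<And>s. s \<le> t (n-1) \<Longrightarrow> f2 s > 0 \<and> d2 s > 0"
    unfolding f2_def d2_def using f_pos[of n] n by simp
  have fp1: "\<And>s. s \<le> t (n-2) \<Longrightarrow> f1 s > 0 \<and> d1 s > 0"
    unfolding f1_def d1_def using f_pos[of "n-1"] n i1 by simp
  have mvn: "MV f2 d2 (t (n-2)) (t (n-1))" using mv2 t21 by simp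
  have Av2c: "Av f2 (t (n-2)) (t (n-1)) \<le> (F2 + 2 * fm + F3) / 4"
    using Av_two_chord[OF mvn t21] by (simp add: F2_def fm_def F3_def)
  have Zn': "Zt f2 (t (n-2)) (t (n-1)) / (1 + \<rho>) \<ge> 0"
    using Zt_nonneg[OF mvn t21] fp2[of "t (n-2)"] t21 rhop by (auto simp: less_imp_le)
  have sc: "3/4 * F1 + F2 - fm / 2 - F3 / 4 > 0"
    using S3_link[OF n2 n(2)] by (simp add: F1_def F2_def fm_def F3_def f1_def f2_def)
  have h2: "h (t (n-2)) = F1 - F2" by (simp add: h_def F1_def F2_def)
  have mvh: "MV h h' (t (n-3)) (t (n-2))" using hMV t32 by simp
  have mvf1: "MV f1 d1 (t (n-3)) (t (n-2))" using mv1 t32 by simp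
  have mvf2: "MV f2 d2 (t (n-3)) (t (n-2))" using mv2 t32 t21 by simp
  have Avh: "Av h (t (n-3)) (t (n-2)) \<le> (h (t (n-3)) + h (t (n-2))) / 2" using Av_chord[OF mvh t32] .
  have h3: "0 \<le> h (t (n-3))" "h (t (n-3)) \<le> h (t (n-2))"
  proof -
    show "0 \<le> h (t (n-3))" using hp[of "t (n-3)"] t32 by simp
    have "h' (t (n-3)) * (t (n-2) - t (n-3)) \<le> h (t (n-2)) - h (t (n-3))"
      using MV_le[OF mvh order_refl, of "t (n-2)"] t32 by simp
    moreover have "h' (t (n-3)) * (t (n-2) - t (n-3)) \<ge> 0" using hp[of "t (n-3)"] t32 by simp
    ultimately show "h (t (n-3)) \<le> h (t (n-2))" by simp
  qed
  have Avd: "Av h (t (n-3)) (t (n-2)) = Av f1 (t (n-3)) (t (n-2)) - Av f2 (t (n-3)) (t (n-2))"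
    unfolding h_def by (rule Av_diff[OF MV_integrable[OF mvf1] MV_integrable[OF mvf2]])
  have Zd: "Zt h (t (n-3)) (t (n-2)) = Zt f1 (t (n-3)) (t (n-2)) - Zt f2 (t (n-3)) (t (n-2))"
    unfolding h_def by (rule Zt_diff[OF MV_integrable_w[OF mvf1] MV_integrable_w[OF mvf2]])
  have Zh: "Zt h (t (n-3)) (t (n-2)) \<ge> 0" using Zt_nonneg[OF mvh t32] hp[of "t (n-3)"] t32 by (auto simp: less_imp_le)
  have Z2: "Zt f2 (t (n-3)) (t (n-2)) \<ge> 0" using Zt_nonneg[OF mvf2 t32] fp2[of "t (n-3)"] t32 t21 by (auto simp: less_imp_le)
  define Z1 where "Z1 = Zt f1 (t (n-3)) (t (n-2))"
  define Zb where "Zb = Zt f2 (t (n-3)) (t (n-2))"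
  have q1: "Zb / (r * (1 + r)) \<le> Z1 / (r * (1 + r))" "Zb / (1 + r) \<le> Z1 / (1 + r)"
    using Zh Zd rp by (auto simp: Z1_def Zb_def intro!: divide_right_mono)
  have q2: "Zb / (r * (1 + r)) \<ge> 0" using Z2 rp by (simp add: Zb_def)
  have L1: "Akern \<alpha> t (n-1) 0 = 2 * F1 + 2 * (Z1 / (r * (1 + r)))"
    using Akern_top[of "n-1" t \<alpha>] mesh[of "n-1"] n al i1 unfolding varpi_fpow
    by (simp add: F1_def f1_def Z1_def r_def varpi_fpow)
  have R1: "Akern \<alpha> t n 1 = Av f2 (t (n-2)) (t (n-1)) + Zb / (r * (1 + r)) - Zt f2 (t (n-2)) (t (n-1)) / (1 + \<rho>)"
    using Akern_int[of "n-1" n t \<alpha>] tn n al i1 unfolding Kint_def by (simp add: f2_def Zb_def r_def \<rho>_def)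
  show ?thesis
  proof (cases "n = 3")
    case True
    have L2: "Akern \<alpha> t (n-1) 1 = Av f1 (t (n-3)) (t (n-2)) - Z1 / (1 + r)"
      using Akern_edge[of "n-1" t \<alpha>] mesh[of "n-1"] True n al unfolding Kedge_def
      by (simp add: f1_def Z1_def r_def)
    have R2: "Akern \<alpha> t n 2 = Av f2 (t (n-3)) (t (n-2)) - Zb / (1 + r)"
      using Akern_edge[of n t \<alpha>] tn tle[of 1 2] True n al unfolding Kedge_def
      by (simp add: f2_def Zb_def r_def)
    show ?thesis unfolding L1 L2 R1 R2
      using Av2c Zn' sc h2 Avh h3 Avd q1 q2 by argo
  next
    case False
    then have n4: "4 \<le> n" using n by simp
    define r' where "r' = ratio t (n-2)"
    have r': "r' \<ge> 385/1000" using rat[of "n-2"] n4 n by (simp add: r'_def)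
    have t43: "t (n-4) < t (n-3)" using tlt[of "n-4" "n-3"] n4 n by simp
    have L2: "Akern \<alpha> t (n-1) 1 = Av f1 (t (n-3)) (t (n-2)) + Zt f1 (t (n-4)) (t (n-3)) / (r' * (1 + r')) - Z1 / (1 + r)"
    proof -
      have "Akern \<alpha> t (n-1) ((n-1) - (n-2)) = Kint t (varpi \<alpha> t (n-1)) (n-2)"
        using Akern_int[of "n-2" "n-1" t \<alpha>] mesh[of "n-1"] tle[of "n-2" "n-2"] n4 n al i1 by simp
      moreover have "(n-1) - (n-2) = 1" using n4 by simp
      ultimately show ?thesis unfolding Kint_def using i1 by (simp add: f1_def Z1_def r_def r'_def)
    qed
    have R2: "Akern \<alpha> t n 2 = Av f2 (t (n-3)) (t (n-2)) + Zt f2 (t (n-4)) (t (n-3)) / (r' * (1 + r')) - Zb / (1 + r)"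
    proof -
      have "Akern \<alpha> t n (n - (n-2)) = Kint t (varpi \<alpha> t n) (n-2)"
        using Akern_int[of "n-2" n t \<alpha>] tn tle[of "n-2" "n-1"] n4 n al by simp
      moreover have "n - (n-2) = 2" using n4 by simp
      ultimately show ?thesis unfolding Kint_def using i1 by (simp add: f2_def Zb_def r_def r'_def)
    qed
    have mvh4: "MV h h' (t (n-4)) (t (n-3))" using hMV t43 t32 by simp
    have mvf14: "MV f1 d1 (t (n-4)) (t (n-3))" using mv1 t43 t32 by simp
    have mvf24: "MV f2 d2 (t (n-4)) (t (n-3))" using mv2 t43 t32 t21 by simp
    have Zd4: "Zt h (t (n-4)) (t (n-3)) = Zt f1 (t (n-4)) (t (n-3)) - Zt f2 (t (n-4)) (t (n-3))"
      unfolding h_def by (rule Zt_diff[OF MV_integrable_w[OF mvf14] MV_integrable_w[OF mvf24]])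
    have rp': "r' > 0" using r' by simp
    define X where "X = Zt h (t (n-4)) (t (n-3)) / (r' * (1 + r'))"
    have Xd: "Zt f1 (t (n-4)) (t (n-3)) / (r' * (1 + r')) - Zt f2 (t (n-4)) (t (n-3)) / (r' * (1 + r')) = X"
      unfolding X_def Zd4 by (simp add: diff_divide_distrib)
    have Zh4: "Zt h (t (n-4)) (t (n-3)) \<ge> 0" using Zt_nonneg[OF mvh4 t43] hp[of "t (n-4)"] t43 t32 by (auto simp: less_imp_le)
    have ZA: "Zt h (t (n-4)) (t (n-3)) \<le> Av h (t (n-4)) (t (n-3))"
      using Zt_le_Av[OF t43 MV_cont[OF mvh4]] hp t32 by (auto simp: less_imp_le)
    have Ac: "Av h (t (n-4)) (t (n-3)) \<le> (h (t (n-4)) + h (t (n-3))) / 2" using Av_chord[OF mvh4 t43] .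
    have h43: "h (t (n-4)) \<le> h (t (n-3))"
    proof -
      have "h' (t (n-4)) * (t (n-3) - t (n-4)) \<le> h (t (n-3)) - h (t (n-4))"
        using MV_le[OF mvh4 order_refl, of "t (n-3)"] t43 by simp
      moreover have "h' (t (n-4)) * (t (n-3) - t (n-4)) \<ge> 0" using hp[of "t (n-4)"] t43 t32 by simp
      ultimately show ?thesis by simp
    qed
    have Zh3: "Zt h (t (n-4)) (t (n-3)) \<le> h (t (n-3))" using ZA Ac h43 by simp
    have b3: "1 / (r' * (1 + r')) \<le> 18755/10000" using ratio_bound3[OF r'] .
    have "X = Zt h (t (n-4)) (t (n-3)) * (1 / (r' * (1 + r')))" by (simp add: X_def)
    also have "\<dots> \<le> h (t (n-3)) * (18755/10000)"
      using Zh4 Zh3 b3 rp' by (intro mult_mono) auto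
    finally have X1: "X \<le> 18755/10000 * h (t (n-3))" by simp
    have r'e: "r' = (t (n-2) - t (n-3)) / (t (n-3) - t (n-4))"
      using ratio_eq[of "n-2" t] n4 i1 by (simp add: r'_def)
    have zl: "X \<le> h' (t (n-3)) * (t (n-2) - t (n-3)) / (6 * r'^2 * (1 + r'))"
      unfolding X_def using Z_left[OF mvh4 t43 t32 r'e] .
    define P where "P = h' (t (n-3)) * (t (n-2) - t (n-3))"
    have P: "P \<ge> 0" "P \<le> h (t (n-2)) - h (t (n-3))"
      using hp[of "t (n-3)"] t32 MV_le[OF mvh order_refl, of "t (n-2)"] by (auto simp: P_def)
    have b1: "1 / (6 * r'^2 * (1 + r')) \<le> 8122/10000" using ratio_bound1[OF r'] .
    have "h' (t (n-3)) * (t (n-2) - t (n-3)) / (6 * r'^2 * (1 + r')) = P * (1 / (6 * r'^2 * (1 + r')))"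
      by (simp add: P_def)
    also have "\<dots> \<le> P * (8122/10000)" using P b1 by (intro mult_left_mono) auto
    finally have X2a: "h' (t (n-3)) * (t (n-2) - t (n-3)) / (6 * r'^2 * (1 + r')) \<le> P * (8122/10000)" .
    have X2b: "P * (8122/10000) \<le> 8122/10000 * (h (t (n-2)) - h (t (n-3)))" using P by simp
    have X2: "X \<le> 8122/10000 * (h (t (n-2)) - h (t (n-3)))" using zl X2a X2b by linarith
    show ?thesis unfolding L1 L2 R1 R2
      using Av2c Zn' sc h2 Avh h3 Avd q1 q2 Xd X1 X2 by argo
  qed
qed

lemma K_c:
  assumes n: "3 \<le> n" "n \<le> N" and k: "1 \<le> k" "k \<le> n - 2"
  shows "Akern \<alpha> t (n-1) (n-2-k) - Akern \<alpha> t (n-1) (n-1-k) > Akern \<alpha> t n (n-k-1) - Akern \<alpha> t n (n-k)"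
proof (cases "k + 1 \<le> n - 2")
  case True
  show ?thesis by (rule K_c_int[OF n k(1) True])
next
  case False
  then have kk: "k = n - 2" using k by simp
  have e: "n - 2 - k = 0" "n - 1 - k = 1" "n - k - 1 = 1" "n - k = 2" using kk n by auto
  show ?thesis using K_c_top[OF n] e by simp
qed

end


theorem lemma2p2:
  fixes \<alpha> T :: real and t :: "nat \<Rightarrow> real" and N :: nat
  assumes alpha: "0 < \<alpha>" "\<alpha> < 1"
    and t0: "t 0 = 0" and mesh: "\<And>k. 1 \<le> k \<Longrightarrow> k \<le> N \<Longrightarrow> t (k - 1) < t k"
    and tN: "t N = T"
    and ratio_ge: "\<And>k. 2 \<le> k \<Longrightarrow> k \<le> N \<Longrightarrow> ratio t k \<ge> rstar \<alpha>"
  shows "(\<forall>n k. 2 \<le> n \<and> n \<le> N \<and> 1 \<le> k \<and> k \<le> n - 1 \<longrightarrow>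
            Akern \<alpha> t n (n - k - 1) > Akern \<alpha> t n (n - k) \<and> Akern \<alpha> t n (n - k) > 0)
       \<and> (\<forall>n k. 2 \<le> n \<and> n \<le> N \<and> 1 \<le> k \<and> k \<le> n - 1 \<longrightarrow>
            Akern \<alpha> t (n - 1) (n - 1 - k) > Akern \<alpha> t n (n - k))
       \<and> (\<forall>n k. 3 \<le> n \<and> n \<le> N \<and> 1 \<le> k \<and> k \<le> n - 2 \<longrightarrow>
            Akern \<alpha> t (n - 1) (n - 2 - k) - Akern \<alpha> t (n - 1) (n - 1 - k)
              > Akern \<alpha> t n (n - k - 1) - Akern \<alpha> t n (n - k))"
proof -
  have rat: "\<And>k. 2 \<le> k \<Longrightarrow> k \<le> N \<Longrightarrow> ratio t k \<ge> 385/1000"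
    using ratio_ge rstar_gt[OF alpha] by (meson less_imp_le order_trans)
  show ?thesis
    using K_pos[OF alpha mesh rat] K_mono[OF alpha mesh rat] K_b[OF alpha mesh rat] K_c[OF alpha mesh rat]
    by blast
qed


end
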